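(* Let $k$ be an algebraically closed field of characteristic zero and let $A$ be a standard graded $k$-algebra which is not a principal ideal algebra. Let $r=\operatorname{crit.deg.}(A)$ be its critical degree. Then there exists a surjective $k$-algebra homomorphism $$A\twoheadrightarrow Q(r)=k[X,Y]/\langle X^{r+1},X^rY,Y^2\rangle .$$
   Context: All algebras are commutative, unital and finite dimensional over $k$. A principal ideal algebra is a finite dimensional commutative $k$-algebra in which every ideal is principal. A finite dimensional non-negatively graded algebra $A=A_0\oplus A_1\oplus\cdots\oplus A_n$ is standard if $M=A_1\oplus\cdots\oplus A_n$ is a maximal ideal generated by elements of degree one. For such $A$ not a principal ideal algebra, let $\mathcal{E}$ be the set of $i\in\mathbb{N}$ for which there exist $N\ge0$ and a $k$-algebra homomorphism $\alpha:A\to k[t]/\langle t^{N+1}\rangle$ with $\dim_k\alpha(A_i)\ge2$; this set is finite and nonempty, and the critical degree is $\operatorname{crit.deg.}(A)=\max\mathcal{E}$. *)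

theory Defs
  imports "HOL-Computational_Algebra.Polynomial"
begin

text \<open>Ring ideals of a commutative ring (for a k-algebra these coincide with algebra ideals).\<close>
definition is_ideal :: "'a::comm_ring_1 set \<Rightarrow> bool" where
  "is_ideal I \<longleftrightarrow> 0 \<in> I \<and> (\<forall>x\<in>I. \<forall>y\<in>I. x + y \<in> I) \<and> (\<forall>a. \<forall>x\<in>I. a * x \<in> I)"

definition ideal_gen :: "'a::comm_ring_1 set \<Rightarrow> 'a set" where
  "ideal_gen S = \<Inter>{I. is_ideal I \<and> S \<subseteq> I}"

definition maximal_ideal :: "'a::comm_ring_1 set \<Rightarrow> bool" where
  "maximal_ideal I \<longleftrightarrow> is_ideal I \<and> I \<noteq> UNIV \<and>
     (\<forall>J. is_ideal J \<and> I \<subseteq> J \<longrightarrow> J = I \<or> J = UNIV)"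

definition principal_ideal_algebra :: "'a::comm_ring_1 itself \<Rightarrow> bool" where
  "principal_ideal_algebra _ \<longleftrightarrow>
     (\<forall>I::'a set. is_ideal I \<longrightarrow> (\<exists>g. I = {a * g | a. True}))"

definition kalg :: "('k::field \<Rightarrow> 'a::comm_ring_1 \<Rightarrow> 'a) \<Rightarrow> bool" where
  "kalg scale \<longleftrightarrow> vector_space scale \<and>
     (\<forall>c a b. scale c (a * b) = scale c a * b \<and> scale c (a * b) = a * scale c b)"

definition finite_dim :: "('k::field \<Rightarrow> 'a::comm_ring_1 \<Rightarrow> 'a) \<Rightarrow> bool" where
  "finite_dim scale \<longleftrightarrow> (\<exists>B. finite B \<and> module.span scale B = UNIV)"

definition irrelevant_ideal :: "(nat \<Rightarrow> 'a::comm_ring_1 set) \<Rightarrow> 'a set" where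
  "irrelevant_ideal Agr =
     {x. \<exists>n f. (\<forall>i\<in>{1..n}. f i \<in> Agr i) \<and> x = (\<Sum>i=1..n. f i)}"

definition std_graded :: "('k::field \<Rightarrow> 'a::comm_ring_1 \<Rightarrow> 'a) \<Rightarrow> (nat \<Rightarrow> 'a set) \<Rightarrow> bool" where
  "std_graded scale Agr \<longleftrightarrow>
     (\<forall>i. module.subspace scale (Agr i)) \<and>
     (\<forall>i j. \<forall>x\<in>Agr i. \<forall>y\<in>Agr j. x * y \<in> Agr (i + j)) \<and>
     (\<exists>n. (\<forall>i>n. Agr i = {0}) \<and>
          (\<forall>a. \<exists>!f. (\<forall>i. f i \<in> Agr i) \<and> (\<forall>i>n. f i = 0) \<and> a = (\<Sum>i\<le>n. f i))) \<and>
     maximal_ideal (irrelevant_ideal Agr) \<and>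
     irrelevant_ideal Agr = ideal_gen (Agr 1)"

text \<open>A k-algebra homomorphism A \<rightarrow> B/I, represented by a map phi into B (choice of representatives);
  emb is the structure map k \<rightarrow> B.\<close>
definition alg_hom_mod ::
  "('k::field \<Rightarrow> 'a::comm_ring_1 \<Rightarrow> 'a) \<Rightarrow> ('k \<Rightarrow> 'b::comm_ring_1) \<Rightarrow> 'b set \<Rightarrow> ('a \<Rightarrow> 'b) \<Rightarrow> bool" where
  "alg_hom_mod scale emb I \<phi> \<longleftrightarrow>
     (\<forall>a b. \<phi> (a + b) - (\<phi> a + \<phi> b) \<in> I) \<and>
     (\<forall>c a. \<phi> (scale c a) - emb c * \<phi> a \<in> I) \<and>
     (\<forall>a b. \<phi> (a * b) - \<phi> a * \<phi> b \<in> I) \<and>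
     \<phi> 1 - 1 \<in> I"

text \<open>dim_k of the image of S in B/I is at least 2: two k-linearly independent classes.\<close>
definition quot_dim_ge2 :: "('k::field \<Rightarrow> 'b::comm_ring_1) \<Rightarrow> 'b set \<Rightarrow> 'b set \<Rightarrow> bool" where
  "quot_dim_ge2 emb I S \<longleftrightarrow>
     (\<exists>u\<in>S. \<exists>v\<in>S. \<forall>c d. emb c * u + emb d * v \<in> I \<longrightarrow> c = 0 \<and> d = 0)"

definition trunc_ideal :: "nat \<Rightarrow> 'k::field poly set" where
  "trunc_ideal N = {p * [:0, 1:] ^ (N + 1) | p. True}"

definition crit_set :: "('k::field \<Rightarrow> 'a::comm_ring_1 \<Rightarrow> 'a) \<Rightarrow> (nat \<Rightarrow> 'a set) \<Rightarrow> nat set" where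
  "crit_set scale Agr =
     {i. \<exists>N (\<alpha>::'a \<Rightarrow> 'k poly). alg_hom_mod scale (\<lambda>c. [:c:]) (trunc_ideal N) \<alpha> \<and>
           quot_dim_ge2 (\<lambda>c. [:c:]) (trunc_ideal N) (\<alpha> ` Agr i)}"

definition crit_deg :: "('k::field \<Rightarrow> 'a::comm_ring_1 \<Rightarrow> 'a) \<Rightarrow> (nat \<Rightarrow> 'a set) \<Rightarrow> nat" where
  "crit_deg scale Agr = Max (crit_set scale Agr)"

text \<open>k[X,Y] is modelled as ('k poly) poly: outer variable Y, inner variable X.\<close>
definition QX :: "'k::field poly poly" where "QX = [:[:0, 1:]:]"
definition QY :: "'k::field poly poly" where "QY = [:0, 1:]"

definition Q_ideal :: "nat \<Rightarrow> 'k::field poly poly set" where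
  "Q_ideal r = {a * QX ^ (r + 1) + b * (QX ^ r * QY) + c * QY ^ 2 | a b c. True}"

end

theory Submission
  imports Defs
begin



locale sga =
  fixes scale :: "'k::field \<Rightarrow> 'a::comm_ring_1 \<Rightarrow> 'a" and Agr :: "nat \<Rightarrow> 'a set"
  assumes kalg: "kalg scale" and grd: "std_graded scale Agr"
begin

lemma vs: "vector_space scale" using kalg by (simp add: kalg_def)
sublocale V: vector_space scale by (rule vs)

lemma scale_mult_left: "scale c (a*b) = scale c a * b"
  using kalg by (simp add: kalg_def)
lemma scale_mult_right: "scale c (a*b) = a * scale c b"
  using kalg unfolding kalg_def by blast
lemma scale_1: "scale c a = scale c 1 * a"
  using scale_mult_left[of c 1 a] by simp

lemma sub: "V.subspace (Agr i)" using grd by (simp add: std_graded_def)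
lemma hmul: "x \<in> Agr i \<Longrightarrow> y \<in> Agr j \<Longrightarrow> x * y \<in> Agr (i + j)"
  using grd by (simp add: std_graded_def)
lemma zero_in: "0 \<in> Agr i" using sub V.subspace_0 by blast
lemma add_in: "x \<in> Agr i \<Longrightarrow> y \<in> Agr i \<Longrightarrow> x + y \<in> Agr i" using sub V.subspace_add by blast
lemma scale_in: "x \<in> Agr i \<Longrightarrow> scale c x \<in> Agr i" using sub V.subspace_scale by blast
lemma neg_in: "x \<in> Agr i \<Longrightarrow> - x \<in> Agr i" using sub V.subspace_neg by blast
lemma diff_in: "x \<in> Agr i \<Longrightarrow> y \<in> Agr i \<Longrightarrow> x - y \<in> Agr i" using sub V.subspace_diff by blast
lemma sum_in: "finite S \<Longrightarrow> (\<And>s. s \<in> S \<Longrightarrow> f s \<in> Agr i) \<Longrightarrow> sum f S \<in> Agr i"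
  using sub V.subspace_sum by blast

definition nn where "nn = (SOME n. (\<forall>i>n. Agr i = {0}) \<and>
          (\<forall>a. \<exists>!f. (\<forall>i. f i \<in> Agr i) \<and> (\<forall>i>n. f i = 0) \<and> a = (\<Sum>i\<le>n. f i)))"

lemma nn_prop: "(\<forall>i>nn. Agr i = {0}) \<and>
          (\<forall>a. \<exists>!f. (\<forall>i. f i \<in> Agr i) \<and> (\<forall>i>nn. f i = 0) \<and> a = (\<Sum>i\<le>nn. f i))"
  unfolding nn_def by (rule someI_ex) (use grd in \<open>simp add: std_graded_def\<close>)

lemma high_zero: "i > nn \<Longrightarrow> Agr i = {0}" using nn_prop by blast

definition comp where "comp a = (THE f. (\<forall>i. f i \<in> Agr i) \<and> (\<forall>i>nn. f i = 0) \<and> a = (\<Sum>i\<le>nn. f i))"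

lemma comp_props: "(\<forall>i. comp a i \<in> Agr i) \<and> (\<forall>i>nn. comp a i = 0) \<and> a = (\<Sum>i\<le>nn. comp a i)"
  unfolding comp_def by (rule theI'[OF nn_prop[THEN conjunct2, rule_format]])

lemma comp_in: "comp a i \<in> Agr i" using comp_props by blast
lemma comp_high: "i > nn \<Longrightarrow> comp a i = 0" using comp_props by blast
lemma comp_sum: "a = (\<Sum>i\<le>nn. comp a i)" using comp_props by blast

lemma comp_unique: "(\<forall>i. f i \<in> Agr i) \<Longrightarrow> (\<forall>i>nn. f i = 0) \<Longrightarrow> a = (\<Sum>i\<le>nn. f i) \<Longrightarrow> comp a = f"
  unfolding comp_def by (rule the1_equality[OF nn_prop[THEN conjunct2, rule_format]]) simp

lemma comp_gen:
  assumes f: "\<And>i. f i \<in> Agr i" and a: "a = (\<Sum>i\<le>K. f i)"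
  shows "comp a i = (if i \<le> K then f i else 0)"
proof -
  define g where "g i = (if i \<le> K then f i else 0)" for i
  have g1: "\<forall>i. g i \<in> Agr i" using f zero_in by (simp add: g_def)
  have g2: "\<forall>i>nn. g i = 0" using g1 high_zero by blast
  have "a = (\<Sum>i\<le>K. g i)" using a by (simp add: g_def)
  also have "\<dots> = (\<Sum>i\<le>max K nn. g i)"
    by (rule sum.mono_neutral_left) (auto simp: g_def)
  also have "\<dots> = (\<Sum>i\<le>nn. g i)"
    by (rule sum.mono_neutral_right) (use g2 in auto)
  finally have "comp a = g" using comp_unique g1 g2 by blast
  then show ?thesis by (simp add: g_def)
qed

lemma comp_homog: "x \<in> Agr j \<Longrightarrow> comp x i = (if i = j then x else 0)"
proof -
  assume x: "x \<in> Agr j"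
  have "comp x i = (if i \<le> j then (if i = j then x else 0) else 0)"
    by (rule comp_gen) (use x zero_in in \<open>auto simp: sum.delta\<close>)
  then show ?thesis by auto
qed

lemma comp_add: "comp (a + b) i = comp a i + comp b i"
proof -
  have "comp (a+b) = (\<lambda>i. comp a i + comp b i)"
    by (rule comp_unique) (auto simp: comp_in add_in comp_high sum.distrib comp_sum[symmetric])
  then show ?thesis by simp
qed

lemma comp_scale: "comp (scale c a) i = scale c (comp a i)"
proof -
  have "comp (scale c a) = (\<lambda>i. scale c (comp a i))"
  proof (rule comp_unique)
    show "scale c a = (\<Sum>i\<le>nn. scale c (comp a i))"
      by (subst (1) comp_sum[of a]) (rule V.scale_sum_right)
  qed (auto simp: comp_in scale_in comp_high)
  then show ?thesis by simp
qed

lemma comp_zero: "comp 0 i = 0" using comp_homog[OF zero_in[of 0]] by simp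

lemma comp_neg: "comp (- a) i = - comp a i"
proof -
  have "comp a i + comp (-a) i = 0" using comp_add[of a "-a" i] comp_zero by simp
  then show ?thesis by (simp add: add_eq_0_iff)
qed

lemma comp_diff: "comp (a - b) i = comp a i - comp b i"
  using comp_add[of a "-b"] comp_neg by simp

lemma comp_sumS: "finite S \<Longrightarrow> comp (sum f S) i = (\<Sum>s\<in>S. comp (f s) i)"
  by (induction S rule: finite_induct) (auto simp: comp_zero comp_add)

lemma comp_sum_list: "comp (sum_list xs) i = sum_list (map (\<lambda>x. comp x i) xs)"
  by (induction xs) (auto simp: comp_zero comp_add)

lemma comp_mult_homog:
  assumes y: "y \<in> Agr j"
  shows "comp (b * y) k = (if j \<le> k then comp b (k - j) * y else 0)"
proof -
  define f where "f k = (if j \<le> k then comp b (k - j) * y else 0)" for k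
  have fi: "f k \<in> Agr k" for k
    using hmul[OF comp_in y, of b "k - j"] zero_in by (auto simp: f_def)
  have "b * y = (\<Sum>i\<le>nn. comp b i * y)"
    by (subst comp_sum[of b]) (simp add: sum_distrib_right)
  also have "\<dots> = (\<Sum>k\<in>(\<lambda>i. i + j) ` {..nn}. f k)"
    by (subst sum.reindex) (auto simp: f_def inj_on_def)
  also have "\<dots> = (\<Sum>k\<le>nn + j. f k)"
  proof (rule sum.mono_neutral_left)
    show "\<forall>k\<in>{..nn + j} - (\<lambda>i. i + j) ` {..nn}. f k = 0"
    proof
      fix k assume k: "k \<in> {..nn + j} - (\<lambda>i. i + j) ` {..nn}"
      show "f k = 0"
      proof (cases "j \<le> k")
        case True
        then have "k = (k - j) + j" "k - j \<le> nn" using k by auto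
        then have "k \<in> (\<lambda>i. i + j) ` {..nn}" by blast
        then show ?thesis using k by blast
      qed (simp add: f_def)
    qed
  qed auto
  finally have "comp (b*y) k = (if k \<le> nn + j then f k else 0)"
    by (intro comp_gen fi)
  then show ?thesis
    by (auto simp: f_def comp_high)
qed

lemma one_in: "1 \<in> Agr 0"
proof -
  define e where "e = comp 1 0"
  have h: "e * x = x" if "x \<in> Agr j" for x j
  proof -
    have "comp (1 * x) j = e * x" using comp_mult_homog[OF that, of 1 j] by (simp add: e_def)
    then show ?thesis using comp_homog[OF that] by simp
  qed
  have "e * a = a" for a
    by (subst (1 2) comp_sum[of a]) (simp add: sum_distrib_left h[OF comp_in])
  from this[of 1] have "e = 1" by simp
  then show ?thesis using comp_in[of 1 0] by (simp add: e_def)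
qed

lemma comp_one: "comp 1 i = (if i = 0 then 1 else 0)"
  using comp_homog[OF one_in] .

end



context sga
begin

lemma M_char: "x \<in> irrelevant_ideal Agr \<longleftrightarrow> comp x 0 = 0"
proof
  assume "x \<in> irrelevant_ideal Agr"
  then obtain n f where f: "\<forall>i\<in>{1..n}. f i \<in> Agr i" and x: "x = (\<Sum>i=1..n. f i)"
    by (auto simp: irrelevant_ideal_def)
  have "comp x 0 = (\<Sum>i=1..n. comp (f i) 0)" unfolding x by (rule comp_sumS) simp
  also have "\<dots> = 0" by (rule sum.neutral) (use f comp_homog in fastforce)
  finally show "comp x 0 = 0" .
next
  assume h: "comp x 0 = 0"
  have "x = (\<Sum>i\<le>nn. comp x i)" by (rule comp_sum)
  also have "{..nn} = insert 0 {1..nn}" by auto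
  also have "(\<Sum>i\<in>insert 0 {1..nn}. comp x i) = (\<Sum>i=1..nn. comp x i)"
    by (subst sum.insert) (auto simp: h)
  finally show "x \<in> irrelevant_ideal Agr"
    unfolding irrelevant_ideal_def using comp_in by blast
qed

lemma M_max: "maximal_ideal (irrelevant_ideal Agr)" using grd unfolding std_graded_def by blast
lemma M_gen: "irrelevant_ideal Agr = ideal_gen (Agr 1)" using grd unfolding std_graded_def by blast
lemma M_ideal: "is_ideal (irrelevant_ideal Agr)" using M_max by (simp add: maximal_ideal_def)

lemma A0_inv:
  assumes x: "x \<in> Agr 0" "x \<noteq> 0"
  shows "\<exists>y\<in>Agr 0. y * x = 1"
proof -
  let ?M = "irrelevant_ideal Agr"
  define J where "J = {m + b * x | m b. m \<in> ?M}"
  have M0: "0 \<in> ?M" using M_ideal by (simp add: is_ideal_def)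
  have Madd: "m1 \<in> ?M \<Longrightarrow> m2 \<in> ?M \<Longrightarrow> m1 + m2 \<in> ?M" for m1 m2 using M_ideal by (simp add: is_ideal_def)
  have Mmul: "m \<in> ?M \<Longrightarrow> a * m \<in> ?M" for a m using M_ideal by (simp add: is_ideal_def)
  have "is_ideal J"
    unfolding is_ideal_def
  proof (intro conjI ballI allI)
    have "(0::'a) = 0 + 0 * x" by simp
    then show "0 \<in> J" unfolding J_def using M0 by blast
  next
    fix u v assume "u \<in> J" "v \<in> J"
    then obtain m1 b1 m2 b2 where "u = m1 + b1 * x" "m1 \<in> ?M" "v = m2 + b2 * x" "m2 \<in> ?M"
      by (auto simp: J_def)
    then have "u + v = (m1 + m2) + (b1 + b2) * x" "m1 + m2 \<in> ?M" using Madd[of m1 m2] by (simp_all add: algebra_simps)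
    then show "u + v \<in> J" unfolding J_def by blast
  next
    fix a u assume "u \<in> J"
    then obtain m1 b1 where "u = m1 + b1 * x" "m1 \<in> ?M"
      by (auto simp: J_def)
    then have "a * u = (a * m1) + (a * b1) * x" "a * m1 \<in> ?M" using Mmul[of m1 a] by (simp_all add: algebra_simps)
    then show "a * u \<in> J" unfolding J_def by blast
  qed
  moreover have "?M \<subseteq> J"
  proof
    fix m assume "m \<in> ?M"
    moreover have "m = m + 0 * x" by simp
    ultimately show "m \<in> J" unfolding J_def by blast
  qed
  ultimately have "J = ?M \<or> J = UNIV" using M_max by (simp add: maximal_ideal_def)
  moreover have "x \<in> J"
  proof -
    have "x = 0 + 1 * x" by simp
    then show ?thesis unfolding J_def using M0 by blast
  qed
  moreover have "x \<notin> ?M" using M_char comp_homog[OF x(1)] x(2) by simp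
  ultimately have "1 \<in> J" by auto
  then obtain m b where mb: "1 = m + b * x" "m \<in> ?M" by (auto simp: J_def)
  have "comp 1 0 = comp m 0 + comp (b * x) 0" by (subst mb(1)) (rule comp_add)
  also have "\<dots> = comp b 0 * x" using mb M_char comp_mult_homog[OF x(1)] by simp
  finally have "comp b 0 * x = 1" using comp_one by simp
  then show ?thesis using comp_in by blast
qed

lemma A0_domain:
  assumes "x \<in> Agr 0" "x \<noteq> 0" "x * y = 0" shows "y = 0"
proof -
  obtain z where "z * x = 1" using A0_inv assms by blast
  then have "y = z * (x * y)" by (metis mult.assoc mult_1)
  then show ?thesis using assms by simp
qed

definition F1 :: "'k \<Rightarrow> 'a" where "F1 c = scale c 1"

lemma F1_0: "F1 0 = 0" by (simp add: F1_def)
lemma F1_mult: "F1 (c * d) = F1 c * F1 d"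
  by (simp add: F1_def) (metis V.scale_scale scale_1)
lemma F1_add: "F1 (c + d) = F1 c + F1 d" by (simp add: F1_def V.scale_left_distrib)
lemma F1_neg: "F1 (- c) = - F1 c" by (simp add: F1_def)

lemma map_F1_add: "map_poly F1 (p + q) = map_poly F1 p + map_poly F1 q"
  by (rule poly_eqI) (simp add: coeff_map_poly F1_0 F1_add)

definition ev :: "'k poly \<Rightarrow> 'a \<Rightarrow> 'a" where "ev p x = poly (map_poly F1 p) x"

lemma ev_lin: "ev ([:- c, 1:] * q) x = (x - F1 c) * ev q x"
proof -
  have e1: "[:- c, 1:] * q = smult (- c) q + pCons 0 q" by simp
  have "ev ([:- c, 1:] * q) x = F1 (- c) * ev q x + x * ev q x"
    unfolding e1 ev_def map_F1_add
    by (simp only: map_poly_smult[where f=F1, OF F1_0 F1_mult] map_poly_pCons[where f=F1, OF F1_0] poly_add poly_smult poly_pCons F1_0)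
      simp
  then show ?thesis by (simp add: F1_neg algebra_simps)
qed

lemma ev_const: "ev [:c:] x = F1 c"
  by (simp add: ev_def map_poly_pCons F1_0)

lemma F1_eq0: "F1 c = 0 \<Longrightarrow> c = 0"
proof (rule ccontr)
  assume "F1 c = 0" "c \<noteq> 0"
  then have "scale (inverse c) (scale c 1) = 0" by (simp add: F1_def)
  then have "(1::'a) = 0" using \<open>c \<noteq> 0\<close> by simp
  then show False by simp
qed

lemma root_descent:
  assumes alg: "\<forall>p::'k poly. degree p > 0 \<longrightarrow> (\<exists>x. poly p x = 0)"
    and x: "x \<in> Agr 0"
  shows "p \<noteq> 0 \<Longrightarrow> ev p x = 0 \<Longrightarrow> \<exists>c. x = scale c 1"
proof (induction "degree p" arbitrary: p rule: less_induct)
  case less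
  show ?case
  proof (cases "degree p = 0")
    case True
    then obtain c where p: "p = [:c:]" by (rule degree_eq_zeroE)
    then have "F1 c = 0" using less ev_const by simp
    then have "c = 0" by (rule F1_eq0)
    then show ?thesis using p less by simp
  next
    case False
    then obtain c where "poly p c = 0" using alg by auto
    then obtain q where q: "p = [:- c, 1:] * q" using poly_eq_0_iff_dvd by blast
    have q0: "q \<noteq> 0" using q less by auto
    have "degree p = degree [:- c, 1:] + degree q" unfolding q by (rule degree_mult_eq) (use q0 in auto)
    then have dq: "degree q < degree p" by simp
    have e: "(x - F1 c) * ev q x = 0" using less q ev_lin by simp
    show ?thesis
    proof (cases "x - F1 c = 0")
      case True then show ?thesis by (auto simp: F1_def)
    next
      case False
      have "x - F1 c \<in> Agr 0" using x one_in scale_in diff_in by (simp add: F1_def)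
      then have "ev q x = 0" using A0_domain False e by blast
      then show ?thesis using less(1)[OF dq q0] by blast
    qed
  qed
qed

lemma annihilator:
  assumes fd: "finite_dim scale"
  shows "\<exists>p. p \<noteq> 0 \<and> ev p x = 0"
proof -
  obtain B where B: "finite B" "V.span B = UNIV" using fd by (auto simp: finite_dim_def)
  define S where "S = (\<lambda>i. x ^ i) ` {..card B}"
  show ?thesis
  proof (cases "inj_on (\<lambda>i. x ^ i) {..card B}")
    case False
    then obtain i j where ij: "i \<le> card B" "j \<le> card B" "i \<noteq> j" "x ^ i = x ^ j"
      by (auto simp: inj_on_def)
    define p :: "'k poly" where "p = monom 1 i + monom (-1) j"
    have "coeff p i = 1" using ij by (simp add: p_def coeff_monom)
    then have "p \<noteq> 0" by auto
    moreover have "ev p x = 0"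
      by (simp add: p_def ev_def map_poly_monom F1_0 map_F1_add poly_monom F1_neg ij)
    ultimately show ?thesis by blast
  next
    case True
    then have cS: "card S = Suc (card B)" unfolding S_def using card_image[OF True] by simp
    have "\<not> V.independent S"
    proof
      assume "V.independent S"
      then have "card S \<le> card B" using V.independent_span_bound[OF B(1) \<open>V.independent S\<close>] B(2) by blast
      then show False using cS by simp
    qed
    then obtain t u where tu: "finite t" "t \<subseteq> S" "(\<Sum>v\<in>t. scale (u v) v) = 0" "\<exists>v\<in>t. u v \<noteq> 0"
      unfolding V.dependent_explicit by blast
    define I where "I = {i. i \<le> card B \<and> x ^ i \<in> t}"
    have tI: "t = (\<lambda>i. x ^ i) ` I"
    proof
      show "t \<subseteq> (\<lambda>i. x ^ i) ` I"
      proof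
        fix v assume v: "v \<in> t"
        then obtain i where "i \<le> card B" "v = x ^ i" using tu(2) by (auto simp: S_def)
        then show "v \<in> (\<lambda>i. x ^ i) ` I" using v by (auto simp: I_def)
      qed
    qed (auto simp: I_def)
    have injI: "inj_on (\<lambda>i. x ^ i) I" using True by (rule inj_on_subset) (auto simp: I_def)
    have fI: "finite I" by (simp add: I_def)
    define p where "p = (\<Sum>i\<in>I. monom (u (x ^ i)) i)"
    have cp: "coeff p k = (if k \<in> I then u (x ^ k) else 0)" for k
      unfolding p_def coeff_sum coeff_monom using fI by (simp add: sum.delta)
    obtain v where v: "v \<in> t" "u v \<noteq> 0" using tu by blast
    then obtain i where "i \<in> I" "v = x ^ i" using tI by blast
    then have "coeff p i \<noteq> 0" using cp v by simp
    then have "p \<noteq> 0" by auto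
    moreover have "ev p x = 0"
    proof -
      have mp: "map_poly F1 (sum f A) = (\<Sum>i\<in>A. map_poly F1 (f i))" if "finite A" for f :: "nat \<Rightarrow> 'k poly" and A
        using that by (induction A rule: finite_induct) (auto simp: map_F1_add)
      have "ev p x = (\<Sum>i\<in>I. F1 (u (x ^ i)) * x ^ i)"
        by (simp add: ev_def p_def mp fI poly_sum map_poly_monom F1_0 poly_monom)
      also have "\<dots> = (\<Sum>i\<in>I. scale (u (x ^ i)) (x ^ i))"
        by (simp add: F1_def scale_1[symmetric])
      also have "\<dots> = (\<Sum>v\<in>t. scale (u v) v)"
        unfolding tI by (simp add: sum.reindex[OF injI])
      finally show ?thesis using tu by simp
    qed
    ultimately show ?thesis by blast
  qed
qed

lemma A0_scalar:
  assumes alg: "\<forall>p::'k poly. degree p > 0 \<longrightarrow> (\<exists>x. poly p x = 0)"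
    and fd: "finite_dim scale" and x: "x \<in> Agr 0"
  shows "\<exists>c. x = scale c 1"
  using annihilator[OF fd, of x] root_descent[OF alg x] by blast

definition TL where "TL = {y. \<exists>L. set L \<subseteq> UNIV \<times> Agr 1 \<and> y = sum_list (map (\<lambda>(b,l). b * l) L)}"

lemma TL_ideal: "is_ideal TL"
  unfolding is_ideal_def
proof (intro conjI ballI allI)
  show "0 \<in> TL" unfolding TL_def by (intro CollectI exI[of _ "[]"]) simp
next
  fix u v assume "u \<in> TL" "v \<in> TL"
  then obtain L1 L2 where L: "set L1 \<subseteq> UNIV \<times> Agr 1" "u = sum_list (map (\<lambda>(b,l). b * l) L1)"
    "set L2 \<subseteq> UNIV \<times> Agr 1" "v = sum_list (map (\<lambda>(b,l). b * l) L2)" unfolding TL_def by blast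
  then have "set (L1 @ L2) \<subseteq> UNIV \<times> Agr 1" "u + v = sum_list (map (\<lambda>(b,l). b * l) (L1 @ L2))" by simp_all
  then show "u + v \<in> TL" unfolding TL_def by blast
next
  fix a u assume "u \<in> TL"
  then obtain L where L: "set L \<subseteq> UNIV \<times> Agr 1" "u = sum_list (map (\<lambda>(b,l). b * l) L)"
    unfolding TL_def by blast
  have s: "set (map (\<lambda>(b,l). (a * b, l)) L) \<subseteq> UNIV \<times> Agr 1" using L(1) by auto
  have "sum_list (map (\<lambda>(b,l). b * l) (map (\<lambda>(b,l). (a * b, l)) L)) = a * sum_list (map (\<lambda>(b,l). b * l) L)"
  proof (induction L)
    case (Cons p L) then show ?case by (cases p) (simp add: algebra_simps)
  qed simp
  then have "a * u = sum_list (map (\<lambda>(b,l). b * l) (map (\<lambda>(b,l). (a * b, l)) L))" using L(2) by simp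
  then show "a * u \<in> TL" unfolding TL_def using s by blast
qed

lemma Agr1_TL: "Agr 1 \<subseteq> TL"
proof
  fix l assume l: "l \<in> Agr 1"
  have "l = sum_list (map (\<lambda>(b,l). b * l) [(1, l)])" by simp
  moreover have "set [(1, l)] \<subseteq> UNIV \<times> Agr 1" using l by simp
  ultimately show "l \<in> TL" unfolding TL_def by blast
qed

lemma deg_succ:
  assumes x: "x \<in> Agr (Suc i)"
  shows "\<exists>L. set L \<subseteq> Agr i \<times> Agr 1 \<and> x = sum_list (map (\<lambda>(b,l). b * l) L)"
proof -
  have "x \<in> irrelevant_ideal Agr" using M_char comp_homog[OF x] by simp
  then have "x \<in> ideal_gen (Agr 1)" using M_gen by simp
  moreover have "ideal_gen (Agr 1) \<subseteq> TL"
    unfolding ideal_gen_def by (rule Inter_lower) (use TL_ideal Agr1_TL in blast)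
  ultimately obtain L where L: "set L \<subseteq> UNIV \<times> Agr 1" "x = sum_list (map (\<lambda>(b,l). b * l) L)"
    unfolding TL_def by blast
  have "comp (sum_list (map (\<lambda>(b,l). b * l) L)) (Suc i) =
        sum_list (map (\<lambda>(b,l). b * l) (map (\<lambda>(b,l). (comp b i, l)) L))"
    using L(1)
  proof (induction L)
    case (Cons p L)
    obtain b l where p: "p = (b, l)" by (cases p)
    have l: "l \<in> Agr 1" using Cons.prems p by simp
    have "comp (b * l) (Suc i) = comp b i * l" using comp_mult_homog[OF l, of b "Suc i"] by simp
    then show ?case using Cons p by (simp add: comp_add)
  qed (simp add: comp_zero)
  then have "x = sum_list (map (\<lambda>(b,l). b * l) (map (\<lambda>(b,l). (comp b i, l)) L))"
    using L(2) comp_homog[OF x] by simp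
  moreover have "set (map (\<lambda>(b,l). (comp b i, l)) L) \<subseteq> Agr i \<times> Agr 1" using L(1) comp_in by auto
  ultimately show ?thesis by blast
qed

lemma pow_in: assumes x: "x \<in> Agr 1" shows "x ^ k \<in> Agr k"
proof (induction k)
  case 0 then show ?case by (simp add: one_in)
next
  case (Suc k)
  have "x ^ k * x \<in> Agr (k + 1)" by (rule hmul[OF Suc.IH x])
  then show ?case by (metis Suc_eq_plus1 power_Suc2)
qed

lemma pow_nil: "x \<in> Agr 1 \<Longrightarrow> x ^ Suc nn = 0"
  using pow_in[of x "Suc nn"] high_zero[of "Suc nn"] by auto

end



definition eqN :: "nat \<Rightarrow> 'k::field poly \<Rightarrow> 'k poly \<Rightarrow> bool" where
  "eqN N p q \<longleftrightarrow> (\<forall>k\<le>N. coeff p k = coeff q k)"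

lemma Xpow: "[:0, 1:] ^ n = monom 1 n" by (simp add: monom_altdef)

lemma eqN_refl[simp]: "eqN N p p" by (simp add: eqN_def)
lemma eqN_sym: "eqN N p q \<Longrightarrow> eqN N q p" by (simp add: eqN_def)
lemma eqN_trans: "eqN N p q \<Longrightarrow> eqN N q s \<Longrightarrow> eqN N p s" by (simp add: eqN_def)
lemma eqN_add: "eqN N p p' \<Longrightarrow> eqN N q q' \<Longrightarrow> eqN N (p + q) (p' + q')" by (simp add: eqN_def)
lemma eqN_diff: "eqN N p p' \<Longrightarrow> eqN N q q' \<Longrightarrow> eqN N (p - q) (p' - q')" by (simp add: eqN_def)
lemma eqN_neg: "eqN N p p' \<Longrightarrow> eqN N (- p) (- p')" by (simp add: eqN_def)
lemma eqN_smult: "eqN N p p' \<Longrightarrow> eqN N (smult c p) (smult c p')" by (simp add: eqN_def)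
lemma eqN_mult: "eqN N p p' \<Longrightarrow> eqN N q q' \<Longrightarrow> eqN N (p * q) (p' * q')"
  unfolding eqN_def coeff_mult by (auto intro!: sum.cong)
lemma eqN_power: "eqN N p p' \<Longrightarrow> eqN N (p ^ n) (p' ^ n)"
  by (induction n) (auto intro: eqN_mult)
lemma eqN_sum_list: "(\<And>x. x \<in> set xs \<Longrightarrow> eqN N (f x) (g x)) \<Longrightarrow> eqN N (sum_list (map f xs)) (sum_list (map g xs))"
  by (induction xs) (auto intro: eqN_add)
lemma eqN_coeff: "eqN N p q \<Longrightarrow> k \<le> N \<Longrightarrow> coeff p k = coeff q k" by (simp add: eqN_def)
lemma eqN_diff0: "eqN N (p - q) 0 \<longleftrightarrow> eqN N p q" by (simp add: eqN_def)

lemma trunc_iff: "p \<in> trunc_ideal N \<longleftrightarrow> eqN N p 0"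
proof
  assume "p \<in> trunc_ideal N"
  then obtain r where "p = r * [:0, 1:] ^ (N + 1)" by (auto simp: trunc_ideal_def)
  then have "p = monom 1 (N + 1) * r" by (metis Xpow mult.commute)
  then show "eqN N p 0" by (simp add: eqN_def coeff_monom_mult)
next
  assume h: "eqN N p 0"
  have "p = poly_shift (N + 1) p * [:0, 1:] ^ (N + 1)"
  proof (rule poly_eqI)
    fix k
    show "coeff p k = coeff (poly_shift (N + 1) p * [:0, 1:] ^ (N + 1)) k"
      unfolding Xpow mult.commute[of _ "monom 1 (N + 1)"] coeff_monom_mult coeff_poly_shift
      using h by (auto simp: eqN_def)
  qed
  then show "p \<in> trunc_ideal N" unfolding trunc_ideal_def by blast
qed

lemma trunc_diff: "p - q \<in> trunc_ideal N \<longleftrightarrow> eqN N p q"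
  by (simp add: trunc_iff eqN_diff0)

lemma trunc_ideal_is: "is_ideal (trunc_ideal N)"
  unfolding is_ideal_def
proof (intro conjI ballI allI)
  show "0 \<in> trunc_ideal N" by (simp add: trunc_iff)
  show "x + y \<in> trunc_ideal N" if "x \<in> trunc_ideal N" "y \<in> trunc_ideal N" for x y
    using that eqN_add[of N x 0 y 0] by (simp add: trunc_iff)
  show "a * x \<in> trunc_ideal N" if "x \<in> trunc_ideal N" for a x
    using that eqN_mult[of N a a x 0] by (simp add: trunc_iff)
qed

lemma smult_conv: "[:c:] * p = smult c p" by simp

lemma dvd_trunc: "[:0, 1:] ^ (N + 1) dvd p \<Longrightarrow> eqN N p 0"
  by (auto simp: trunc_iff[symmetric] trunc_ideal_def mult.commute elim!: dvdE)

lemma X_dvd: "coeff (p::'k::field poly) 0 = 0 \<Longrightarrow> [:0, 1:] dvd p"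
  using dvd_iff_poly_eq_0[of 0 p] by (simp add: poly_0_coeff_0)

lemma inv_exists:
  fixes g :: "'k::field poly"
  assumes g0: "coeff g 0 = 1"
  shows "\<exists>h. eqN N (g * h) 1"
proof -
  define h where "h = (\<Sum>i<N + 1. (1 - g) ^ i)"
  have "1 - (1 - g) ^ (N + 1) = (1 - (1 - g)) * h" unfolding h_def by (rule one_diff_power_eq)
  then have gh: "g * h = 1 - (1 - g) ^ (N + 1)" by simp
  have "[:0, 1:] dvd (1 - g)" by (rule X_dvd) (simp add: g0)
  then have "[:0, 1:] ^ (N + 1) dvd (1 - g) ^ (N + 1)" by (rule dvd_power_same)
  then have "eqN N ((1 - g) ^ (N + 1)) 0" by (rule dvd_trunc)
  then have "eqN N (1 - (1 - g) ^ (N + 1)) (1 - 0)" by (intro eqN_diff) simp_all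
  then have "eqN N (g * h) 1" unfolding gh by simp
  then show ?thesis by blast
qed

lemma conv_gap:
  fixes P Q :: "'k::field poly"
  assumes P: "\<And>p. p \<le> N \<Longrightarrow> p \<noteq> u \<Longrightarrow> p < u + m \<Longrightarrow> coeff P p = 0"
    and Q: "\<And>q. q \<le> N \<Longrightarrow> q \<noteq> v \<Longrightarrow> q < v + m \<Longrightarrow> coeff Q q = 0"
    and k: "k \<le> N" "k \<noteq> u + v" "k < u + v + m"
  shows "coeff (P * Q) k = 0"
  unfolding coeff_mult
proof (rule sum.neutral, rule ballI)
  fix p assume p: "p \<in> {..k}"
  show "coeff P p * coeff Q (k - p) = 0"
  proof (cases "p \<noteq> u \<and> p < u + m")
    case True then show ?thesis using P[of p] p k by auto
  next
    case False
    then have "k - p \<noteq> v \<and> k - p < v + m" using p k by auto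
    then show ?thesis using Q[of "k - p"] p k by auto
  qed
qed

lemma conv_lead0:
  fixes P Q :: "'k::field poly"
  assumes P: "\<And>p. p \<le> N \<Longrightarrow> p \<noteq> u \<Longrightarrow> p < u + m \<Longrightarrow> coeff P p = 0"
    and Q: "\<And>q. q \<le> N \<Longrightarrow> q \<noteq> v \<Longrightarrow> q < v + m \<Longrightarrow> coeff Q q = 0"
    and k: "u + v \<le> N"
  shows "coeff (P * Q) (u + v) = coeff P u * coeff Q v"
  unfolding coeff_mult
proof -
  have "(\<Sum>i\<le>u + v. coeff P i * coeff Q (u + v - i)) = (\<Sum>i\<in>{u}. coeff P i * coeff Q (u + v - i))"
  proof (rule sum.mono_neutral_right)
    show "\<forall>i\<in>{..u + v} - {u}. coeff P i * coeff Q (u + v - i) = 0"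
    proof
      fix p assume p: "p \<in> {..u + v} - {u}"
      show "coeff P p * coeff Q (u + v - p) = 0"
      proof (cases "p < u + m")
        case True then show ?thesis using P[of p] p k by auto
      next
        case False
        then have "u + v - p \<noteq> v \<and> u + v - p < v + m" using p k by auto
        then show ?thesis using Q[of "u + v - p"] p k by auto
      qed
    qed
  qed auto
  then show "(\<Sum>i\<le>u + v. coeff P i * coeff Q (u + v - i)) = coeff P u * coeff Q v" by simp
qed

lemma conv_lead1:
  fixes P Q :: "'k::field poly"
  assumes P: "\<And>p. p \<le> N \<Longrightarrow> p \<noteq> u \<Longrightarrow> p < u + m \<Longrightarrow> coeff P p = 0"
    and Q: "\<And>q. q \<le> N \<Longrightarrow> q \<noteq> v \<Longrightarrow> q < v + m \<Longrightarrow> coeff Q q = 0"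
    and k: "u + v + m \<le> N" and m: "0 < m"
  shows "coeff (P * Q) (u + v + m) = coeff P u * coeff Q (v + m) + coeff P (u + m) * coeff Q v"
  unfolding coeff_mult
proof -
  have "(\<Sum>i\<le>u + v + m. coeff P i * coeff Q (u + v + m - i)) = (\<Sum>i\<in>{u, u + m}. coeff P i * coeff Q (u + v + m - i))"
  proof (rule sum.mono_neutral_right)
    show "\<forall>i\<in>{..u + v + m} - {u, u + m}. coeff P i * coeff Q (u + v + m - i) = 0"
    proof
      fix p assume p: "p \<in> {..u + v + m} - {u, u + m}"
      show "coeff P p * coeff Q (u + v + m - p) = 0"
      proof (cases "p < u + m")
        case True then show ?thesis using P[of p] p k by auto
      next
        case False
        then have "u + v + m - p \<noteq> v \<and> u + v + m - p < v + m" using p k by auto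
        then show ?thesis using Q[of "u + v + m - p"] p k by auto
      qed
    qed
  qed auto
  also have "\<dots> = coeff P u * coeff Q (v + m) + coeff P (u + m) * coeff Q v"
    using m by (simp add: add.commute add.left_commute)
  finally show "(\<Sum>i\<le>u + v + m. coeff P i * coeff Q (u + v + m - i)) = coeff P u * coeff Q (v + m) + coeff P (u + m) * coeff Q v" .
qed

definition QXm :: "'k::field poly poly" where "QXm = QX"

lemma Q_ideal_is: "is_ideal (Q_ideal r :: 'k::field poly poly set)"
  unfolding is_ideal_def
proof (intro conjI ballI allI)
  show "0 \<in> Q_ideal r" unfolding Q_ideal_def by (intro CollectI exI[of _ 0]) simp
next
  fix x y :: "'k poly poly" assume "x \<in> Q_ideal r" "y \<in> Q_ideal r"
  then obtain a b c a' b' c' :: "'k poly poly" where "x = a * QX ^ (r + 1) + b * (QX ^ r * QY) + c * QY ^ 2"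
    "y = a' * QX ^ (r + 1) + b' * (QX ^ r * QY) + c' * QY ^ 2" unfolding Q_ideal_def by blast
  then have "x + y = (a + a') * QX ^ (r + 1) + (b + b') * (QX ^ r * QY) + (c + c') * QY ^ 2"
    by (simp add: algebra_simps)
  then show "x + y \<in> Q_ideal r" unfolding Q_ideal_def by blast
next
  fix d x :: "'k poly poly" assume "x \<in> Q_ideal r"
  then obtain a b c :: "'k poly poly" where "x = a * QX ^ (r + 1) + b * (QX ^ r * QY) + c * QY ^ 2"
    unfolding Q_ideal_def by blast
  then have "d * x = (d * a) * QX ^ (r + 1) + (d * b) * (QX ^ r * QY) + (d * c) * QY ^ 2"
    by (simp add: algebra_simps)
  then show "d * x \<in> Q_ideal r" unfolding Q_ideal_def by blast
qed

lemma ideal_add: "is_ideal I \<Longrightarrow> x \<in> I \<Longrightarrow> y \<in> I \<Longrightarrow> x + y \<in> I" by (simp add: is_ideal_def)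
lemma ideal_mul: "is_ideal I \<Longrightarrow> x \<in> I \<Longrightarrow> a * x \<in> I" by (simp add: is_ideal_def)
lemma ideal_0: "is_ideal I \<Longrightarrow> 0 \<in> I" by (simp add: is_ideal_def)
lemma ideal_neg: "is_ideal I \<Longrightarrow> x \<in> I \<Longrightarrow> - x \<in> I" using ideal_mul[of I x "-1"] by simp
lemma ideal_diff: assumes "is_ideal I" "x \<in> I" "y \<in> I" shows "x - y \<in> I"
proof -
  have "x + - y \<in> I" using ideal_add ideal_neg assms by blast
  then show ?thesis by simp
qed
lemma ideal_sum: assumes I: "is_ideal I" shows "finite S \<Longrightarrow> (\<And>s. s \<in> S \<Longrightarrow> f s \<in> I) \<Longrightarrow> sum f S \<in> I"
proof (induction S rule: finite_induct)
  case empty then show ?case using ideal_0[OF I] by simp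
next
  case (insert s S) then show ?case using ideal_add[OF I] by simp
qed

lemma QXpow_in: "k \<ge> r + 1 \<Longrightarrow> (QX :: 'k::field poly poly) ^ k \<in> Q_ideal r"
proof -
  assume "k \<ge> r + 1"
  then have "(QX :: 'k poly poly) ^ k = QX ^ (k - (r + 1)) * QX ^ (r + 1)"
    by (metis le_add_diff_inverse2 power_add)
  then have "(QX :: 'k poly poly) ^ k = QX ^ (k - (r + 1)) * QX ^ (r + 1) + 0 * (QX ^ r * QY) + 0 * QY ^ 2"
    by simp
  then show ?thesis unfolding Q_ideal_def by blast
qed

lemma QXYpow_in: "k \<ge> r \<Longrightarrow> (QX :: 'k::field poly poly) ^ k * QY \<in> Q_ideal r"
proof -
  assume "k \<ge> r"
  then have "(QX :: 'k poly poly) ^ k = QX ^ (k - r) * QX ^ r"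
    by (metis le_add_diff_inverse2 power_add)
  then have "(QX :: 'k poly poly) ^ k * QY = 0 * QX ^ (r + 1) + QX ^ (k - r) * (QX ^ r * QY) + 0 * QY ^ 2"
    by (simp add: mult.assoc)
  then show ?thesis unfolding Q_ideal_def by blast
qed

lemma QY2_in: "(QY :: 'k::field poly poly) ^ 2 \<in> Q_ideal r"
proof -
  have "(QY :: 'k poly poly) ^ 2 = 0 * QX ^ (r + 1) + 0 * (QX ^ r * QY) + 1 * QY ^ 2" by simp
  then show ?thesis unfolding Q_ideal_def by blast
qed




lemma coeff_sum_list_map: "coeff (sum_list (map f L)) k = sum_list (map (\<lambda>x. coeff (f x) k) L)"
  by (induction L) auto

lemma sum_list_zero: "(\<And>x. x \<in> set L \<Longrightarrow> f x = 0) \<Longrightarrow> sum_list (map f L) = 0"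
  by (induction L) auto

locale arcset = sga scale Agr for scale :: "'k::field \<Rightarrow> 'a::comm_ring_1 \<Rightarrow> 'a" and Agr +
  fixes \<alpha> :: "'a \<Rightarrow> 'k poly" and N :: nat
  assumes ahom: "alg_hom_mod scale (\<lambda>c. [:c:]) (trunc_ideal N) \<alpha>"
    and A0s: "\<And>x. x \<in> Agr 0 \<Longrightarrow> \<exists>c. x = scale c 1"
begin

lemma a_add: "eqN N (\<alpha> (x + y)) (\<alpha> x + \<alpha> y)"
  using ahom by (simp add: alg_hom_mod_def trunc_diff)
lemma a_scale: "eqN N (\<alpha> (scale c x)) (smult c (\<alpha> x))"
  using ahom by (simp add: alg_hom_mod_def trunc_diff)
lemma a_mult: "eqN N (\<alpha> (x * y)) (\<alpha> x * \<alpha> y)"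
  using ahom by (simp add: alg_hom_mod_def trunc_diff)
lemma a_one: "eqN N (\<alpha> 1) 1"
  using ahom by (simp add: alg_hom_mod_def trunc_diff)
lemma a_zero: "eqN N (\<alpha> 0) 0"
proof -
  have e: "eqN N (\<alpha> 0) (\<alpha> 0 + \<alpha> 0)" using a_add[of 0 0] by (simp only: add_0)
  show ?thesis unfolding eqN_def
  proof (intro allI impI)
    fix k assume k: "k \<le> N"
    have "coeff (\<alpha> 0) k = coeff (\<alpha> 0) k + coeff (\<alpha> 0) k" using eqN_coeff[OF e k] by (simp only: coeff_add)
    then show "coeff (\<alpha> 0) k = coeff 0 k" by (metis add_cancel_right_right coeff_0)
  qed
qed
lemma a_sum_list: "eqN N (\<alpha> (sum_list xs)) (sum_list (map \<alpha> xs))"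
proof (induction xs)
  case Nil then show ?case using a_zero by simp
next
  case (Cons x xs)
  then show ?case using a_add[of x "sum_list xs"] eqN_add[OF eqN_refl Cons.IH, of "\<alpha> x"]
    by (auto intro: eqN_trans)
qed
lemma a_const: "eqN N (\<alpha> (scale c 1)) [:c:]"
  using eqN_trans[OF a_scale eqN_smult[OF a_one]] by simp

lemma a_prodlist: "eqN N (\<alpha> (sum_list (map (\<lambda>(b,l). b * l) L))) (sum_list (map (\<lambda>(b,l). \<alpha> b * \<alpha> l) L))"
proof -
  have "eqN N (\<alpha> (sum_list (map (\<lambda>(b,l). b * l) L))) (sum_list (map \<alpha> (map (\<lambda>(b,l). b * l) L)))"
    by (rule a_sum_list)
  also have "sum_list (map \<alpha> (map (\<lambda>(b,l). b * l) L)) = sum_list (map (\<lambda>p. \<alpha> (case p of (b, l) \<Rightarrow> b * l)) L)"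
    by (induction L) auto
  finally have 1: "eqN N (\<alpha> (sum_list (map (\<lambda>(b,l). b * l) L))) (sum_list (map (\<lambda>p. \<alpha> (case p of (b, l) \<Rightarrow> b * l)) L))" .
  have 2: "eqN N (sum_list (map (\<lambda>p. \<alpha> (case p of (b, l) \<Rightarrow> b * l)) L)) (sum_list (map (\<lambda>(b,l). \<alpha> b * \<alpha> l) L))"
    by (rule eqN_sum_list) (auto simp: a_mult split: prod.splits)
  show ?thesis using eqN_trans[OF 1 2] .
qed

end

locale critset = arcset scale Agr \<alpha> N for scale :: "'k::field \<Rightarrow> 'a::comm_ring_1 \<Rightarrow> 'a" and Agr \<alpha> N +
  fixes r :: nat and u v :: 'a
  assumes uv: "u \<in> Agr r" "v \<in> Agr r"
    and indep: "\<forall>c d. [:c:] * \<alpha> u + [:d:] * \<alpha> v \<in> trunc_ideal N \<longrightarrow> c = 0 \<and> d = 0"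
begin

lemma indepE: "eqN N (smult c (\<alpha> u) + smult d (\<alpha> v)) 0 \<Longrightarrow> c = 0 \<and> d = 0"
  using indep by (simp add: trunc_iff)

lemma u_nonzero: "\<not> eqN N (\<alpha> u) 0"
proof
  assume "eqN N (\<alpha> u) 0"
  then have "eqN N (smult 1 (\<alpha> u) + smult 0 (\<alpha> v)) 0" by simp
  then show False using indepE[of 1 0] by simp
qed

lemma r_pos: "r \<ge> 1"
proof (rule ccontr)
  assume "\<not> r \<ge> 1"
  then have r0: "r = 0" by simp
  obtain c d where cd: "u = scale c 1" "v = scale d 1" using A0s uv r0 by blast
  have eu: "eqN N (\<alpha> u) [:c:]" and ev: "eqN N (\<alpha> v) [:d:]" using cd a_const by auto
  have "eqN N (smult d (\<alpha> u) + smult (- c) (\<alpha> v)) (smult d [:c:] + smult (- c) [:d:])"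
    by (intro eqN_add eqN_smult eu ev)
  then have "eqN N (smult d (\<alpha> u) + smult (- c) (\<alpha> v)) 0" by (simp add: mult.commute)
  then have "d = 0 \<and> c = 0" using indepE by fastforce
  then have "eqN N (\<alpha> u) 0" using eu by simp
  then show False using u_nonzero by simp
qed

lemma exists_nonzero: "\<exists>l\<in>Agr 1. \<exists>k\<le>N. coeff (\<alpha> l) k \<noteq> 0"
proof (rule ccontr)
  assume "\<not> ?thesis"
  then have z: "eqN N (\<alpha> l) 0" if "l \<in> Agr 1" for l using that by (auto simp: eqN_def)
  obtain r' where r': "r = Suc r'" using r_pos by (cases r) auto
  obtain L where L: "set L \<subseteq> Agr r' \<times> Agr 1" "u = sum_list (map (\<lambda>(b,l). b * l) L)"
    using deg_succ uv(1) r' by blast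
  have zz: "eqN N (\<alpha> a * \<alpha> b) 0" if "b \<in> Agr 1" for a b
    using eqN_mult[OF eqN_refl z[OF that], of "\<alpha> a"] by simp
  have "eqN N (sum_list (map (\<lambda>(b,l). \<alpha> b * \<alpha> l) L)) (sum_list (map (\<lambda>_. 0) L))"
    by (rule eqN_sum_list) (use L(1) zz in \<open>auto split: prod.splits\<close>)
  then have "eqN N (\<alpha> u) 0" using a_prodlist[of L] L(2) by (auto intro: eqN_trans)
  then show False using u_nonzero by simp
qed

definition aa where "aa = (LEAST k. k \<le> N \<and> (\<exists>l\<in>Agr 1. coeff (\<alpha> l) k \<noteq> 0))"

lemma aa_props: "aa \<le> N" "\<exists>l\<in>Agr 1. coeff (\<alpha> l) aa \<noteq> 0"
  using LeastI_ex[of "\<lambda>k. k \<le> N \<and> (\<exists>l\<in>Agr 1. coeff (\<alpha> l) k \<noteq> 0)"] exists_nonzero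
  unfolding aa_def by blast+

lemma aa_min: "k < aa \<Longrightarrow> l \<in> Agr 1 \<Longrightarrow> coeff (\<alpha> l) k = 0"
  using not_less_Least[of k "\<lambda>k. k \<le> N \<and> (\<exists>l\<in>Agr 1. coeff (\<alpha> l) k \<noteq> 0)"] aa_props(1)
  unfolding aa_def by auto

lemma l0_ex: "\<exists>l. l \<in> Agr 1 \<and> coeff (\<alpha> l) aa = 1"
proof -
  obtain l where l: "l \<in> Agr 1" "coeff (\<alpha> l) aa \<noteq> 0" using aa_props by blast
  define c where "c = coeff (\<alpha> l) aa"
  have "coeff (\<alpha> (scale (inverse c) l)) aa = coeff (smult (inverse c) (\<alpha> l)) aa"
    using eqN_coeff[OF a_scale aa_props(1)] .
  also have "\<dots> = 1" using l by (simp add: c_def)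
  finally show ?thesis using scale_in l by blast
qed

definition l0 where "l0 = (SOME l. l \<in> Agr 1 \<and> coeff (\<alpha> l) aa = 1)"
lemma l0: "l0 \<in> Agr 1" "coeff (\<alpha> l0) aa = 1"
  using someI_ex[OF l0_ex] unfolding l0_def by blast+

definition gg where "gg = poly_shift aa (\<alpha> l0)"

lemma gg0: "coeff gg 0 = 1" using l0 by (simp add: gg_def coeff_poly_shift)

lemma a_l0: "eqN N (\<alpha> l0) (monom 1 aa * gg)"
  unfolding eqN_def coeff_monom_mult gg_def coeff_poly_shift
  using aa_min[OF _ l0(1)] by auto

definition hh where "hh = (SOME h. eqN N (gg * h) 1)"
lemma gh: "eqN N (gg * hh) 1"
  using someI_ex[OF inv_exists[OF gg0]] unfolding hh_def by blast

definition H where "H i z = hh ^ i * \<alpha> z"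

lemma H_add: "eqN N (H i (z + w)) (H i z + H i w)"
  unfolding H_def distrib_left[symmetric] by (rule eqN_mult[OF eqN_refl a_add])
lemma H_scale: "eqN N (H i (scale c z)) (smult c (H i z))"
  unfolding H_def mult_smult_right[symmetric] by (rule eqN_mult[OF eqN_refl a_scale])
lemma H_mult: "eqN N (H (i + j) (x * y)) (H i x * H j y)"
proof -
  have e: "H i x * H j y = hh ^ (i + j) * (\<alpha> x * \<alpha> y)" by (simp add: H_def power_add algebra_simps)
  show ?thesis unfolding e unfolding H_def by (rule eqN_mult[OF eqN_refl a_mult])
qed
lemma H_zero: "eqN N (H i 0) 0"
  unfolding H_def using eqN_mult[OF eqN_refl a_zero, of "hh ^ i"] by simp

lemma a_from_H: "eqN N (\<alpha> z) (gg ^ i * H i z)"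
proof -
  have "gg ^ i * H i z = (gg * hh) ^ i * \<alpha> z" by (simp add: H_def power_mult_distrib)
  moreover have "eqN N ((gg * hh) ^ i * \<alpha> z) (1 ^ i * \<alpha> z)"
    by (intro eqN_mult eqN_power gh eqN_refl)
  ultimately show ?thesis by (simp add: eqN_sym)
qed

definition mm where "mm = (LEAST m. 0 < m \<and> (N < aa + m \<or> (\<exists>l\<in>Agr 1. coeff (H 1 l) (aa + m) \<noteq> 0)))"

lemma mm_ex: "\<exists>m. 0 < m \<and> (N < aa + m \<or> (\<exists>l\<in>Agr 1. coeff (H 1 l) (aa + m) \<noteq> 0))"
  by (rule exI[of _ "Suc N"]) simp

lemma mm_props: "0 < mm" "N < aa + mm \<or> (\<exists>l\<in>Agr 1. coeff (H 1 l) (aa + mm) \<noteq> 0)"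
  using LeastI_ex[OF mm_ex] unfolding mm_def by blast+

lemma mm_min: "0 < m' \<Longrightarrow> m' < mm \<Longrightarrow> aa + m' \<le> N \<Longrightarrow> l \<in> Agr 1 \<Longrightarrow> coeff (H 1 l) (aa + m') = 0"
  using not_less_Least[of m' "\<lambda>m. 0 < m \<and> (N < aa + m \<or> (\<exists>l\<in>Agr 1. coeff (H 1 l) (aa + m) \<noteq> 0))"]
  unfolding mm_def by auto

lemma gap1:
  assumes l: "l \<in> Agr 1" and k: "k \<le> N" "k \<noteq> aa" "k < aa + mm"
  shows "coeff (H 1 l) k = 0"
proof (cases "k < aa")
  case True
  have "coeff (H 1 l) k = (\<Sum>i\<le>k. coeff hh i * coeff (\<alpha> l) (k - i))"
    by (simp add: H_def coeff_mult)
  also have "\<dots> = 0"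
    by (rule sum.neutral) (use True aa_min[OF _ l] in auto)
  finally show ?thesis .
next
  case False
  then have "k = aa + (k - aa)" "0 < k - aa" "k - aa < mm" using k by auto
  then show ?thesis using mm_min[of "k - aa" l] l k by simp
qed

lemma gap:
  assumes i: "1 \<le> i"
  shows "z \<in> Agr i \<Longrightarrow> k \<le> N \<Longrightarrow> k \<noteq> aa * i \<Longrightarrow> k < aa * i + mm \<Longrightarrow> coeff (H i z) k = 0"
  using i
proof (induction i arbitrary: z k rule: nat_induct_at_least)
  case base then show ?case using gap1 by simp
next
  case (Suc i)
  obtain L where L: "set L \<subseteq> Agr i \<times> Agr 1" "z = sum_list (map (\<lambda>(b,l). b * l) L)"
    using deg_succ Suc.prems(1) by blast
  have "eqN N (H (Suc i) z) (hh ^ Suc i * sum_list (map (\<lambda>(b,l). \<alpha> b * \<alpha> l) L))"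
    unfolding H_def L(2) by (rule eqN_mult[OF eqN_refl a_prodlist])
  also have "hh ^ Suc i * sum_list (map (\<lambda>(b,l). \<alpha> b * \<alpha> l) L) = sum_list (map (\<lambda>(b,l). H i b * H 1 l) L)"
  proof (induction L)
    case (Cons p L) then show ?case by (cases p) (simp add: H_def algebra_simps)
  qed simp
  finally have e: "eqN N (H (Suc i) z) (sum_list (map (\<lambda>(b,l). H i b * H 1 l) L))" .
  have "coeff (H (Suc i) z) k = coeff (sum_list (map (\<lambda>(b,l). H i b * H 1 l) L)) k"
    using eqN_coeff[OF e Suc.prems(2)] .
  also have "\<dots> = sum_list (map (\<lambda>p. coeff (case p of (b, l) \<Rightarrow> H i b * H 1 l) k) L)"
    by (rule coeff_sum_list_map)
  also have "\<dots> = 0"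
  proof (rule sum_list_zero)
    fix y assume y: "y \<in> set L"
    obtain b l where yb: "y = (b, l)" by (cases y)
    then have bl: "(b, l) \<in> set L" "y = (b, l)" using y by auto
    have b: "b \<in> Agr i" and l: "l \<in> Agr 1" using bl L(1) by auto
    have "coeff (H i b * H 1 l) k = 0"
    proof (rule conv_gap[where N = N and u = "aa * i" and v = aa and m = mm])
      show "coeff (H i b) p = 0" if "p \<le> N" "p \<noteq> aa * i" "p < aa * i + mm" for p
        using Suc.IH[OF b that] .
      show "coeff (H 1 l) q = 0" if "q \<le> N" "q \<noteq> aa" "q < aa + mm" for q
        using gap1[OF l that] .
    qed (use Suc.prems in \<open>auto simp: algebra_simps\<close>)
    then show "coeff (case y of (b, l) \<Rightarrow> H i b * H 1 l) k = 0" using bl by simp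
  qed
  finally show ?case .
qed

lemma lead:
  assumes i: "1 \<le> i" and j: "1 \<le> j" and x: "x \<in> Agr i" and y: "y \<in> Agr j"
    and N: "aa * (i + j) + mm \<le> N"
  shows "coeff (H (i + j) (x * y)) (aa * (i + j)) = coeff (H i x) (aa * i) * coeff (H j y) (aa * j)"
    and "coeff (H (i + j) (x * y)) (aa * (i + j) + mm) =
         coeff (H i x) (aa * i) * coeff (H j y) (aa * j + mm) + coeff (H i x) (aa * i + mm) * coeff (H j y) (aa * j)"
proof -
  have P: "coeff (H i x) p = 0" if "p \<le> N" "p \<noteq> aa * i" "p < aa * i + mm" for p
    using gap[OF i x that] .
  have Q: "coeff (H j y) q = 0" if "q \<le> N" "q \<noteq> aa * j" "q < aa * j + mm" for q
    using gap[OF j y that] .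
  have e0: "aa * (i + j) \<le> N" using N by simp
  have "coeff (H (i + j) (x * y)) (aa * (i + j)) = coeff (H i x * H j y) (aa * i + aa * j)"
    using eqN_coeff[OF H_mult e0] by (simp add: algebra_simps)
  also have "\<dots> = coeff (H i x) (aa * i) * coeff (H j y) (aa * j)"
    by (rule conv_lead0[OF P Q]) (use e0 in \<open>simp_all add: algebra_simps\<close>)
  finally show "coeff (H (i + j) (x * y)) (aa * (i + j)) = coeff (H i x) (aa * i) * coeff (H j y) (aa * j)" .
  have "coeff (H (i + j) (x * y)) (aa * (i + j) + mm) = coeff (H i x * H j y) (aa * i + aa * j + mm)"
    using eqN_coeff[OF H_mult N] by (simp add: algebra_simps)
  also have "\<dots> = coeff (H i x) (aa * i) * coeff (H j y) (aa * j + mm) + coeff (H i x) (aa * i + mm) * coeff (H j y) (aa * j)"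
    by (rule conv_lead1[OF P Q]) (use N mm_props(1) in \<open>simp_all add: algebra_simps\<close>)
  finally show "coeff (H (i + j) (x * y)) (aa * (i + j) + mm) =
         coeff (H i x) (aa * i) * coeff (H j y) (aa * j + mm) + coeff (H i x) (aa * i + mm) * coeff (H j y) (aa * j)" .
qed

lemma room: "aa * r + mm \<le> N"
proof (rule ccontr)
  assume "\<not> aa * r + mm \<le> N"
  then have big: "N < aa * r + mm" by simp
  have z: "coeff (H r z) k = 0" if "z \<in> Agr r" "k \<le> N" "k \<noteq> aa * r" for z k
    using that big by (intro gap[OF r_pos]) auto
  define P where "P = coeff (H r u) (aa * r)"
  define P' where "P' = coeff (H r v) (aa * r)"
  have "eqN N (smult P' (H r u) - smult P (H r v)) 0"
    unfolding eqN_def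
  proof (intro allI impI)
    fix k assume "k \<le> N"
    then show "coeff (smult P' (H r u) - smult P (H r v)) k = coeff 0 k"
      by (cases "k = aa * r") (auto simp: z uv P_def P'_def)
  qed
  then have "eqN N (gg ^ r * (smult P' (H r u) - smult P (H r v))) (gg ^ r * 0)"
    by (intro eqN_mult eqN_refl)
  moreover have "eqN N (smult P' (\<alpha> u) + smult (- P) (\<alpha> v)) (gg ^ r * (smult P' (H r u) - smult P (H r v)))"
  proof -
    have "eqN N (smult P' (\<alpha> u) + smult (- P) (\<alpha> v)) (smult P' (gg ^ r * H r u) + smult (- P) (gg ^ r * H r v))"
      by (intro eqN_add eqN_smult a_from_H)
    then show ?thesis by (simp add: algebra_simps)
  qed
  ultimately have "eqN N (smult P' (\<alpha> u) + smult (- P) (\<alpha> v)) 0" by (auto intro: eqN_trans)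
  then have "P' = 0 \<and> P = 0" using indepE by fastforce
  then have "eqN N (H r u) 0" unfolding eqN_def using z uv by (auto simp: P_def)
  then have "eqN N (gg ^ r * H r u) (gg ^ r * 0)" by (intro eqN_mult eqN_refl)
  then have "eqN N (\<alpha> u) 0" using a_from_H[of u r] by (auto intro: eqN_trans)
  then show False using u_nonzero by simp
qed

lemma l1_ex: "\<exists>l\<in>Agr 1. coeff (H 1 l) (aa + mm) \<noteq> 0"
proof -
  have "aa + mm \<le> N" using room r_pos
    by (metis add_le_mono1 le_trans mult.right_neutral mult_le_mono2)
  then show ?thesis using mm_props(2) by simp
qed

end



definition C :: "'k::field \<Rightarrow> 'k poly poly" where "C c = [:[:c:]:]"
lemma C_add: "C (a + b) = C a + C b" by (simp add: C_def)
lemma C_mult: "C (a * b) = C a * C b" by (simp add: C_def)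
lemma C_0[simp]: "C 0 = 0" by (simp add: C_def)
lemma C_1[simp]: "C 1 = 1" by (simp add: C_def one_pCons)

lemma prod_ident:
  fixes X Y a b c d :: "'b::comm_ring_1"
  shows "(a * X ^ Suc i + b * X ^ i * Y) * (c * X ^ Suc j + d * X ^ j * Y) =
    (a * c) * X ^ (Suc i + Suc j) + (a * d + b * c) * (X ^ Suc (i + j) * Y) + (b * d * X ^ (i + j)) * Y ^ 2"
  by (simp add: algebra_simps power_add power2_eq_square)

context critset
begin

lemma idx: "i \<le> r \<Longrightarrow> aa * i + mm \<le> N"
  using room by (meson add_le_mono1 le_trans mult_le_mono2)

definition Phi where
  "Phi i z = C (coeff (H i z) (aa * i)) * QX ^ i + C (if i = 0 then 0 else coeff (H i z) (aa * i + mm)) * QX ^ (i - 1) * QY"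

definition phi where "phi x = (\<Sum>i\<le>r. Phi i (comp x i))"

lemma H_coeff_add: "k \<le> N \<Longrightarrow> coeff (H i (z + w)) k = coeff (H i z) k + coeff (H i w) k"
  using eqN_coeff[OF H_add] by simp
lemma H_coeff_scale: "k \<le> N \<Longrightarrow> coeff (H i (scale c z)) k = c * coeff (H i z) k"
  using eqN_coeff[OF H_scale] by simp
lemma H_coeff_zero: "k \<le> N \<Longrightarrow> coeff (H i 0) k = 0"
  using eqN_coeff[OF H_zero] by simp

lemma Phi_add: "i \<le> r \<Longrightarrow> Phi i (z + w) = Phi i z + Phi i w"
  using idx[of i] by (simp add: Phi_def H_coeff_add C_add algebra_simps)
lemma Phi_scale: "i \<le> r \<Longrightarrow> Phi i (scale c z) = C c * Phi i z"
  using idx[of i] by (simp add: Phi_def H_coeff_scale C_mult algebra_simps)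
lemma Phi_zero: "i \<le> r \<Longrightarrow> Phi i 0 = 0"
  using idx[of i] by (simp add: Phi_def H_coeff_zero)

lemma phi_add: "phi (x + y) = phi x + phi y"
  by (simp add: phi_def comp_add Phi_add sum.distrib)
lemma phi_scale: "phi (scale c x) = C c * phi x"
  by (simp add: phi_def comp_scale Phi_scale sum_distrib_left)
lemma phi_zero: "phi 0 = 0"
  by (simp add: phi_def comp_zero Phi_zero)
lemma phi_sum: "finite S \<Longrightarrow> phi (sum f S) = (\<Sum>s\<in>S. phi (f s))"
  by (induction S rule: finite_induct) (auto simp: phi_zero phi_add)
lemma phi_diff: "phi (x - y) = phi x - phi y"
  using phi_add[of "x - y" y] by simp

lemma phi_homog: "z \<in> Agr d \<Longrightarrow> phi z = (if d \<le> r then Phi d z else 0)"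
proof -
  assume z: "z \<in> Agr d"
  have "phi z = (\<Sum>i\<le>r. if i = d then Phi i z else 0)"
    unfolding phi_def by (rule sum.cong) (auto simp: comp_homog[OF z] Phi_zero)
  then show ?thesis by simp
qed

lemma phi_one: "phi 1 = 1"
proof -
  have "coeff (\<alpha> 1) 0 = 1" using eqN_coeff[OF a_one, of 0] by simp
  then show ?thesis using phi_homog[OF one_in] by (simp add: Phi_def H_def)
qed

lemma phi_const: "phi (scale c 1) = C c"
  using phi_scale[of c 1] phi_one by simp

abbreviation QQ where "QQ \<equiv> Q_ideal r"

lemma QI: "is_ideal QQ" by (rule Q_ideal_is)

lemma mult_homog:
  assumes x: "x \<in> Agr i" and y: "y \<in> Agr j"
  shows "phi (x * y) - phi x * phi y \<in> QQ"
proof (cases "i = 0")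
  case True
  then obtain c where c: "x = scale c 1" using A0s x by blast
  have "x * y = scale c y" using c scale_1[of c y] by simp
  then have "phi (x * y) - phi x * phi y = 0" using c phi_scale phi_const by simp
  then show ?thesis using ideal_0[OF QI] by simp
next
  case i0: False
  show ?thesis
  proof (cases "j = 0")
    case True
    then obtain c where c: "y = scale c 1" using A0s y by blast
    have "x * y = scale c x" using c scale_1[of c x] by (simp add: mult.commute)
    then have e1: "phi (x * y) = C c * phi x" using phi_scale by simp
    have e2: "phi y = C c" using c phi_const by simp
    have "phi (x * y) - phi x * phi y = 0" unfolding e1 e2 by (simp add: mult.commute)
    then show ?thesis using ideal_0[OF QI] by simp
  next
    case j0: False
    obtain i' where ij1: "i = Suc i'" using i0 by (cases i) auto
    obtain j' where ij2: "j = Suc j'" using j0 by (cases j) auto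
    note ij = ij1 ij2
    have xy: "x * y \<in> Agr (i + j)" using hmul[OF x y] .
    define p where "p = coeff (H i x) (aa * i)"
    define q where "q = coeff (H i x) (aa * i + mm)"
    define p' where "p' = coeff (H j y) (aa * j)"
    define q' where "q' = coeff (H j y) (aa * j + mm)"
    have Px: "Phi i x = C p * QX ^ Suc i' + C q * QX ^ i' * QY" by (simp add: Phi_def p_def q_def ij)
    have Py: "Phi j y = C p' * QX ^ Suc j' + C q' * QX ^ j' * QY" by (simp add: Phi_def p'_def q'_def ij)
    have prod: "Phi i x * Phi j y = C (p * p') * QX ^ (i + j) + (C (p * q') + C (q * p')) * (QX ^ Suc (i' + j') * QY)
        + (C (q * q') * QX ^ (i' + j')) * QY ^ 2"
      unfolding Px Py C_mult unfolding ij by (rule prod_ident)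
    show ?thesis
    proof (cases "i + j \<le> r")
      case False
      then have pxy: "phi (x * y) = 0" using phi_homog[OF xy] by simp
      show ?thesis
      proof (cases "i \<le> r \<and> j \<le> r")
        case False
        then have z: "phi x * phi y = 0" using phi_homog[OF x] phi_homog[OF y] by auto
        show ?thesis unfolding pxy z using ideal_0[OF QI] by simp
      next
        case True
        have t1: "QX ^ (i + j) \<in> QQ" using False by (intro QXpow_in) simp
        have t2: "QX ^ Suc (i' + j') * QY \<in> QQ" using False ij by (intro QXYpow_in) simp
        have t3: "QY ^ 2 \<in> QQ" by (rule QY2_in)
        have "Phi i x * Phi j y \<in> QQ"
          unfolding prod
          by (rule ideal_add[OF QI ideal_add[OF QI ideal_mul[OF QI t1] ideal_mul[OF QI t2]] ideal_mul[OF QI t3]])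
        then have "- (phi x * phi y) \<in> QQ" using True phi_homog[OF x] phi_homog[OF y] ideal_neg[OF QI] by simp
        then show ?thesis using pxy by simp
      qed
    next
      case True
      have ir: "i \<le> r" "j \<le> r" using True by auto
      have N: "aa * (i + j) + mm \<le> N" using idx[OF True] .
      have l0: "coeff (H (i + j) (x * y)) (aa * (i + j)) = p * p'"
        using lead(1)[OF _ _ x y N] ij by (simp add: p_def p'_def)
      have l1: "coeff (H (i + j) (x * y)) (aa * (i + j) + mm) = p * q' + q * p'"
        using lead(2)[OF _ _ x y N] ij by (simp add: p_def p'_def q_def q'_def)
      have pxy: "phi (x * y) = C (p * p') * QX ^ (i + j) + (C (p * q') + C (q * p')) * (QX ^ Suc (i' + j') * QY)"
        using phi_homog[OF xy] True l0 l1 ij by (simp add: Phi_def C_add algebra_simps)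
      have "phi (x * y) - phi x * phi y = - ((C (q * q') * QX ^ (i' + j')) * QY ^ 2)"
        using ir phi_homog[OF x] phi_homog[OF y] pxy prod by simp
      moreover have "(C (q * q') * QX ^ (i' + j')) * QY ^ 2 \<in> QQ"
        by (intro ideal_mul[OF QI] QY2_in)
      ultimately show ?thesis using ideal_neg[OF QI] by simp
    qed
  qed
qed

lemma phi_mult: "phi (x * y) - phi x * phi y \<in> QQ"
proof -
  have xy: "x * y = (\<Sum>i\<le>nn. \<Sum>j\<le>nn. comp x i * comp y j)"
    by (subst (1) comp_sum[of x], subst (1) comp_sum[of y]) (rule sum_product)
  have px: "phi x = (\<Sum>i\<le>nn. phi (comp x i))" by (subst (1) comp_sum[of x]) (simp add: phi_sum)
  have py: "phi y = (\<Sum>j\<le>nn. phi (comp y j))" by (subst (1) comp_sum[of y]) (simp add: phi_sum)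
  have "phi (x * y) - phi x * phi y =
      (\<Sum>i\<le>nn. \<Sum>j\<le>nn. phi (comp x i * comp y j) - phi (comp x i) * phi (comp y j))"
    unfolding xy px py by (simp add: phi_sum sum_product sum_subtractf)
  also have "\<dots> \<in> QQ"
    by (intro ideal_sum[OF QI] finite_atMost mult_homog[OF comp_in comp_in])
  finally show ?thesis .
qed

lemma phi_hom: "alg_hom_mod scale (\<lambda>c. [:[:c:]:]) QQ phi"
  unfolding alg_hom_mod_def
  using phi_add phi_scale phi_mult phi_one ideal_0[OF QI] by (simp add: C_def)

definition SS where "SS = {q. \<exists>a. q - phi a \<in> QQ}"

lemma SS_C: "C c \<in> SS"
  unfolding SS_def using phi_const[of c] ideal_0[OF QI] by (auto intro!: exI[of _ "scale c 1"])

lemma SS_add: "q1 \<in> SS \<Longrightarrow> q2 \<in> SS \<Longrightarrow> q1 + q2 \<in> SS"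
proof -
  assume "q1 \<in> SS" "q2 \<in> SS"
  then obtain a1 a2 where a: "q1 - phi a1 \<in> QQ" "q2 - phi a2 \<in> QQ" by (auto simp: SS_def)
  have eq: "(q1 + q2) - phi (a1 + a2) = (q1 - phi a1) + (q2 - phi a2)" by (simp add: phi_add)
  have "(q1 + q2) - phi (a1 + a2) \<in> QQ" unfolding eq by (rule ideal_add[OF QI a])
  then show ?thesis unfolding SS_def by blast
qed

lemma SS_mult: "q1 \<in> SS \<Longrightarrow> q2 \<in> SS \<Longrightarrow> q1 * q2 \<in> SS"
proof -
  assume "q1 \<in> SS" "q2 \<in> SS"
  then obtain a1 a2 where a: "q1 - phi a1 \<in> QQ" "q2 - phi a2 \<in> QQ" by (auto simp: SS_def)
  have "q1 * q2 - phi (a1 * a2) = q2 * (q1 - phi a1) + phi a1 * (q2 - phi a2) - (phi (a1 * a2) - phi a1 * phi a2)"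
    by (simp add: algebra_simps)
  also have "\<dots> \<in> QQ"
    by (intro ideal_diff[OF QI] ideal_add[OF QI] ideal_mul[OF QI] a phi_mult)
  finally show ?thesis unfolding SS_def by blast
qed

lemma H1_l0: "k \<le> N \<Longrightarrow> coeff (H 1 l0) k = (if k = aa then 1 else 0)"
proof -
  assume k: "k \<le> N"
  have "eqN N (H 1 l0) (hh * (monom 1 aa * gg))"
    unfolding H_def by (simp add: eqN_mult[OF eqN_refl a_l0])
  also have "hh * (monom 1 aa * gg) = monom 1 aa * (gg * hh)" by (simp add: algebra_simps)
  finally have "eqN N (H 1 l0) (monom 1 aa * (gg * hh))" .
  moreover have "eqN N (monom 1 aa * (gg * hh)) (monom 1 aa * 1)" by (intro eqN_mult eqN_refl gh)
  ultimately have "eqN N (H 1 l0) (monom 1 aa)" by (auto intro: eqN_trans)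
  then show ?thesis using k by (simp add: eqN_coeff coeff_monom)
qed

lemma phi_l0: "phi l0 = QX"
proof -
  have "aa + mm \<le> N" using idx[of 1] r_pos by simp
  then have c: "coeff (H 1 l0) aa = 1" "coeff (H 1 l0) (aa + mm) = 0"
    using H1_l0 mm_props(1) by auto
  show ?thesis using phi_homog[OF l0(1)] r_pos c by (simp add: Phi_def)
qed

lemma SS_X: "QX \<in> SS"
  unfolding SS_def using phi_l0 ideal_0[OF QI] by (auto intro!: exI[of _ l0])

lemma SS_Y: "QY \<in> SS"
proof -
  obtain l where l: "l \<in> Agr 1" "coeff (H 1 l) (aa + mm) \<noteq> 0" using l1_ex by blast
  define mu where "mu = coeff (H 1 l) (aa + mm)"
  define p where "p = coeff (H 1 l) aa"
  have pl: "phi l = C p * QX + C mu * QY"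
    using phi_homog[OF l(1)] r_pos by (simp add: Phi_def p_def mu_def)
  have "phi (scale (inverse mu) (l - scale p l0)) = C (inverse mu) * (C p * QX + C mu * QY - C p * QX)"
    by (simp add: phi_scale phi_diff pl phi_l0)
  also have "\<dots> = C (inverse mu * mu) * QY" by (simp add: C_mult)
  also have "\<dots> = QY" using l(2) by (simp add: mu_def)
  finally show ?thesis unfolding SS_def using ideal_0[OF QI] by (auto intro!: exI[of _ "scale (inverse mu) (l - scale p l0)"])
qed

lemma SS_all: "q \<in> SS"
proof -
  have inner: "[:a:] \<in> SS" for a :: "'k poly"
  proof (induction a rule: pCons_induct)
    case 0 then show ?case using SS_C[of 0] by simp
  next
    case (pCons c a)
    have "[:pCons c a:] = C c + QX * [:a:]" by (simp add: C_def QX_def)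
    then show ?case using SS_add[OF SS_C SS_mult[OF SS_X pCons.IH]] by simp
  qed
  show ?thesis
  proof (induction q rule: pCons_induct)
    case 0 then show ?case using SS_C[of 0] by simp
  next
    case (pCons a q)
    have "pCons a q = [:a:] + QY * q" by (simp add: QY_def)
    then show ?case using SS_add[OF inner SS_mult[OF SS_Y pCons.IH]] by simp
  qed
qed

theorem main_result:
  "\<exists>\<phi>. alg_hom_mod scale (\<lambda>c. [:[:c:]:]) (Q_ideal r) \<phi> \<and> (\<forall>q. \<exists>a. q - \<phi> a \<in> Q_ideal r)"
  using phi_hom SS_all unfolding SS_def by blast

end



lemma vsk: "vector_space ((*) :: 'k::field \<Rightarrow> 'k \<Rightarrow> 'k)"
  by unfold_locales (simp_all add: algebra_simps)

locale sga0 = sga scale Agr for scale :: "'k::field \<Rightarrow> 'a::comm_ring_1 \<Rightarrow> 'a" and Agr +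
  assumes A0s: "\<And>x. x \<in> Agr 0 \<Longrightarrow> \<exists>c. x = scale c 1"
begin

lemma scale1_inj: "scale c 1 = scale d 1 \<Longrightarrow> c = d"
proof -
  assume "scale c 1 = scale d 1"
  then have "F1 (c - d) = 0" by (simp add: F1_def V.scale_left_diff_distrib)
  then have "c - d = 0" by (rule F1_eq0)
  then show "c = d" by simp
qed

definition e where "e x = (SOME c. comp x 0 = scale c 1)"
lemma e_prop: "comp x 0 = scale (e x) 1"
  unfolding e_def by (rule someI_ex) (use A0s comp_in in blast)
lemma e_eq: "comp x 0 = scale c 1 \<Longrightarrow> e x = c"
  using e_prop scale1_inj by metis
lemma e_add: "e (x + y) = e x + e y"
proof -
  have "comp (x + y) 0 = scale (e x + e y) 1"
    by (simp add: comp_add e_prop[of x] e_prop[of y] V.scale_left_distrib)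
  then show ?thesis by (rule e_eq)
qed
lemma e_scale: "e (scale c x) = c * e x"
proof -
  have "comp (scale c x) 0 = scale (c * e x) 1"
    by (simp add: comp_scale e_prop[of x])
  then show ?thesis by (rule e_eq)
qed
lemma e_one: "e 1 = 1"
  by (rule e_eq) (simp add: comp_one)
lemma e_pos: "x \<in> Agr i \<Longrightarrow> i \<noteq> 0 \<Longrightarrow> e x = 0"
  by (rule e_eq) (simp add: comp_homog)

definition isunit :: "'a \<Rightarrow> bool" where "isunit z \<longleftrightarrow> (\<exists>z'. z * z' = 1)"

lemma PIA_if_cyclic:
  assumes w: "w \<in> Agr 1" and cyc: "\<And>x. x \<in> Agr 1 \<Longrightarrow> \<exists>c. x = scale c w"
  shows "principal_ideal_algebra TYPE('a)"
proof -
  let ?M = "irrelevant_ideal Agr"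
  define W where "W = {a * w | a. True}"
  have W_ideal: "is_ideal W"
    unfolding is_ideal_def W_def
  proof (intro conjI ballI allI)
    show "0 \<in> {a * w |a. True}" by (intro CollectI exI[of _ 0]) simp
    show "x + y \<in> {a * w |a. True}" if xy: "x \<in> {a * w |a. True}" "y \<in> {a * w |a. True}" for x y
    proof -
      obtain a b where "x = a * w" "y = b * w" using xy by blast
      then have "x + y = (a + b) * w" by (simp add: algebra_simps)
      then show ?thesis by blast
    qed
    show "c * x \<in> {a * w |a. True}" if xy: "x \<in> {a * w |a. True}" for c x
    proof -
      obtain a where "x = a * w" using xy by blast
      then have "c * x = (c * a) * w" by (simp add: algebra_simps)
      then show ?thesis by blast
    qed
  qed
  have "Agr 1 \<subseteq> W"
  proof
    fix x assume "x \<in> Agr 1"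
    then obtain c where "x = scale c w" using cyc by blast
    then have "x = scale c 1 * w" using scale_1[of c w] by simp
    then show "x \<in> W" unfolding W_def by blast
  qed
  then have MW: "?M \<subseteq> W" unfolding M_gen ideal_gen_def using W_ideal by blast
  have dec: "\<exists>c a. x = scale c 1 + a * w" for x
  proof -
    have "comp (x - comp x 0) 0 = 0" by (simp add: comp_diff comp_homog[OF comp_in])
    then have "x - comp x 0 \<in> W" using M_char MW by blast
    then obtain a where "x - comp x 0 = a * w" unfolding W_def by blast
    then have "x = scale (e x) 1 + a * w" using e_prop[of x] by (simp add: algebra_simps)
    then show ?thesis by blast
  qed
  have wnil: "w ^ Suc nn = 0" by (rule pow_nil[OF w])
  have unit1: "isunit (1 + s * w)" for s
  proof -
    define y where "y = - (s * w)"
    have "1 - y ^ Suc nn = (1 - y) * (\<Sum>i<Suc nn. y ^ i)" by (rule one_diff_power_eq)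
    moreover have "y ^ Suc nn = 0"
    proof -
      have "y ^ Suc nn = (- s) ^ Suc nn * w ^ Suc nn" unfolding y_def
        by (simp only: minus_mult_left power_mult_distrib)
      then show ?thesis using wnil by simp
    qed
    ultimately have "(1 + s * w) * (\<Sum>i<Suc nn. y ^ i) = 1" by (simp add: y_def)
    then show ?thesis unfolding isunit_def by blast
  qed
  have unit2: "isunit (scale c 1 + a * w)" if "c \<noteq> 0" for c a
  proof -
    have ci: "scale c 1 * scale (inverse c) 1 = (1::'a)"
      using that by (simp flip: scale_1 add: V.scale_scale)
    obtain z where z: "(1 + (scale (inverse c) 1 * a) * w) * z = 1" using unit1 unfolding isunit_def by blast
    have eq: "scale c 1 + a * w = scale c 1 * (1 + (scale (inverse c) 1 * a) * w)"
      using ci by (simp add: algebra_simps)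
    have "(scale c 1 + a * w) * (scale (inverse c) 1 * z) =
        (scale c 1 * scale (inverse c) 1) * ((1 + (scale (inverse c) 1 * a) * w) * z)"
      unfolding eq by (simp only: mult_ac)
    then have "(scale c 1 + a * w) * (scale (inverse c) 1 * z) = 1"
      using ci z by simp
    then show ?thesis unfolding isunit_def by blast
  qed
  have fact: "\<exists>j z. isunit z \<and> x = w ^ j * z" for x
  proof (cases "x = 0")
    case True
    then have "x = w ^ Suc nn * 1" using wnil by simp
    moreover have "isunit 1" by (simp add: isunit_def)
    ultimately show ?thesis by blast
  next
    case False
    define S where "S = {j. \<exists>y. x = w ^ j * y}"
    have "0 \<in> S" unfolding S_def by (intro CollectI exI[of _ x]) simp
    have Sb: "S \<subseteq> {..nn}"
    proof
      fix j assume "j \<in> S"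
      then obtain y where y: "x = w ^ j * y" by (auto simp: S_def)
      show "j \<in> {..nn}"
      proof (rule ccontr)
        assume "j \<notin> {..nn}"
        then have "w ^ j = w ^ Suc nn * w ^ (j - Suc nn)"
          by (metis atMost_iff le_add_diff_inverse not_less_eq_eq power_add)
        then show False using y wnil False by simp
      qed
    qed
    then have fS: "finite S" by (rule finite_subset) simp
    define j0 where "j0 = Max S"
    have "j0 \<in> S" unfolding j0_def using fS \<open>0 \<in> S\<close> by (intro Max_in) auto
    then obtain y where y: "x = w ^ j0 * y" by (auto simp: S_def)
    obtain c a where ca: "y = scale c 1 + a * w" using dec by blast
    show ?thesis
    proof (cases "c = 0")
      case True
      then have "x = w ^ Suc j0 * a" using y ca by (simp add: algebra_simps)
      then have "Suc j0 \<in> S" unfolding S_def by blast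
      then have "Suc j0 \<le> j0" unfolding j0_def by (rule Max_ge[OF fS])
      then show ?thesis by simp
    next
      case False
      then show ?thesis using unit2 y ca by blast
    qed
  qed
  show ?thesis
    unfolding principal_ideal_algebra_def
  proof (intro allI impI)
    fix I :: "'a set" assume I: "is_ideal I"
    let ?P = "\<lambda>j. \<exists>x\<in>I. \<exists>z. isunit z \<and> x = w ^ j * z"
    have "0 \<in> I" using I by (simp add: is_ideal_def)
    then have ex: "?P (Suc nn)" using wnil by (auto simp: isunit_def intro!: bexI[of _ 0] exI[of _ 1])
    define j0 where "j0 = (LEAST j. ?P j)"
    have "?P j0" unfolding j0_def using ex by (rule LeastI)
    then obtain x0 z0 where x0: "x0 \<in> I" "isunit z0" "x0 = w ^ j0 * z0" by blast
    obtain z0' where z0': "z0 * z0' = 1" using x0(2) by (auto simp: isunit_def)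
    have "z0' * x0 = (z0 * z0') * w ^ j0" using x0(3) by (simp only: mult_ac)
    then have "w ^ j0 = z0' * x0" using z0' by simp
    then have wI: "w ^ j0 \<in> I" using I x0(1) by (simp add: is_ideal_def)
    have "I = {a * w ^ j0 | a. True}"
    proof
      show "I \<subseteq> {a * w ^ j0 | a. True}"
      proof
        fix x assume x: "x \<in> I"
        obtain j z where jz: "isunit z" "x = w ^ j * z" using fact by blast
        then have "?P j" using x by blast
        then have "j0 \<le> j" unfolding j0_def by (rule Least_le)
        then have "x = (w ^ (j - j0) * z) * w ^ j0" using jz
          by (simp add: algebra_simps power_add[symmetric])
        then show "x \<in> {a * w ^ j0 | a. True}" by blast
      qed
      show "{a * w ^ j0 | a. True} \<subseteq> I" using wI I by (auto simp: is_ideal_def)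
    qed
    then show "\<exists>g. I = {a * g |a. True}" by blast
  qed
qed

lemma two_indep:
  assumes "\<not> principal_ideal_algebra TYPE('a)"
  shows "\<exists>u\<in>Agr 1. \<exists>v\<in>Agr 1. \<forall>c d. scale c u + scale d v = 0 \<longrightarrow> c = 0 \<and> d = 0"
proof (rule ccontr)
  assume "\<not> ?thesis"
  then have dep: "\<exists>c d. (c \<noteq> 0 \<or> d \<noteq> 0) \<and> scale c u + scale d v = 0" if "u \<in> Agr 1" "v \<in> Agr 1" for u v
    using that by blast
  show False
  proof (cases "\<exists>w\<in>Agr 1. w \<noteq> 0")
    case False
    then have "\<And>x. x \<in> Agr 1 \<Longrightarrow> \<exists>c. x = scale c 0" by auto
    then have "principal_ideal_algebra TYPE('a)" by (rule PIA_if_cyclic[OF zero_in[of 1]])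
    then show False using assms by simp
  next
    case True
    then obtain w where w: "w \<in> Agr 1" "w \<noteq> 0" by blast
    have "\<exists>c. x = scale c w" if x: "x \<in> Agr 1" for x
    proof -
      obtain c d where cd: "c \<noteq> 0 \<or> d \<noteq> 0" "scale c w + scale d x = 0" using dep[OF w(1) x] by blast
      have d: "d \<noteq> 0"
      proof
        assume "d = 0"
        then have "scale c w = 0" "c \<noteq> 0" using cd by auto
        then show False using w(2) by simp
      qed
      have "scale d x = - scale c w" using cd(2) by (simp add: eq_neg_iff_add_eq_0 add.commute)
      then have "scale (inverse d) (scale d x) = scale (inverse d) (- scale c w)" by simp
      then have "x = scale (- (inverse d * c)) w" using d by simp
      then show ?thesis by blast
    qed
    then have "principal_ideal_algebra TYPE('a)" by (rule PIA_if_cyclic[OF w(1)])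
    then show False using assms by simp
  qed
qed

end




lemma pp_monom: "pCons 0 (pCons 0 p) = monom 1 2 * (p :: 'k::field poly)"
  by (simp add: numeral_2_eq_2 monom_Suc)

context sga0
begin

lemma bilin:
  fixes \<psi> :: "'a \<Rightarrow> 'b::comm_ring_1"
  assumes add: "\<And>x y. \<psi> (x + y) = \<psi> x + \<psi> y" and I: "is_ideal I"
    and hom: "\<And>i j x y. x \<in> Agr i \<Longrightarrow> y \<in> Agr j \<Longrightarrow> \<psi> (x * y) - \<psi> x * \<psi> y \<in> I"
  shows "\<psi> (x * y) - \<psi> x * \<psi> y \<in> I"
proof -
  have z: "\<psi> 0 = 0" using add[of 0 0] by simp
  have sm: "\<psi> (sum f S) = (\<Sum>s\<in>S. \<psi> (f s))" if "finite S" for f :: "nat \<Rightarrow> 'a" and S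
    using that by (induction S rule: finite_induct) (auto simp: z add)
  have xy: "x * y = (\<Sum>i\<le>nn. \<Sum>j\<le>nn. comp x i * comp y j)"
    by (subst (1) comp_sum[of x], subst (1) comp_sum[of y]) (rule sum_product)
  have px: "\<psi> x = (\<Sum>i\<le>nn. \<psi> (comp x i))" by (subst (1) comp_sum[of x]) (simp add: sm)
  have py: "\<psi> y = (\<Sum>j\<le>nn. \<psi> (comp y j))" by (subst (1) comp_sum[of y]) (simp add: sm)
  have "\<psi> (x * y) - \<psi> x * \<psi> y =
      (\<Sum>i\<le>nn. \<Sum>j\<le>nn. \<psi> (comp x i * comp y j) - \<psi> (comp x i) * \<psi> (comp y j))"
    unfolding xy px py by (simp add: sm sum_product sum_subtractf)
  also have "\<dots> \<in> I"
    by (intro ideal_sum[OF I] finite_atMost hom[OF comp_in comp_in])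
  finally show ?thesis .
qed

lemma crit_finite: "finite (crit_set scale Agr)"
proof -
  have "crit_set scale Agr \<subseteq> {..nn}"
  proof
    fix i assume i: "i \<in> crit_set scale Agr"
    show "i \<in> {..nn}"
    proof (rule ccontr)
      assume "i \<notin> {..nn}"
      then have A: "Agr i = {0}" using high_zero by simp
      obtain N and \<alpha> :: "'a \<Rightarrow> 'k poly" where q: "quot_dim_ge2 (\<lambda>c. [:c:]) (trunc_ideal N) (\<alpha> ` Agr i)"
        using i unfolding crit_set_def by blast
      then have "\<forall>c d. [:c:] * \<alpha> 0 + [:d:] * \<alpha> 0 \<in> trunc_ideal N \<longrightarrow> c = 0 \<and> d = 0"
        unfolding quot_dim_ge2_def A by simp
      moreover have "[:1:] * \<alpha> 0 + [:-1:] * \<alpha> 0 \<in> trunc_ideal N"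
        using ideal_0[OF trunc_ideal_is] by simp
      ultimately have "(1::'k) = 0" by blast
      then show False by simp
    qed
  qed
  then show ?thesis by (rule finite_subset) simp
qed

lemma one_crit:
  assumes u: "u \<in> Agr 1" and v: "v \<in> Agr 1"
    and ind: "\<forall>c d. scale c u + scale d v = 0 \<longrightarrow> c = 0 \<and> d = 0"
  shows "1 \<in> crit_set scale Agr"
proof -
  interpret VP: vector_space_pair scale "(*) :: 'k \<Rightarrow> 'k \<Rightarrow> 'k"
    by (simp add: vector_space_pair_def vs vsk)
  have uv: "u \<noteq> v"
  proof
    assume "u = v"
    then have "scale 1 u + scale (-1) v = 0" by simp
    then show False using ind[rule_format, of 1 "-1"] by simp
  qed
  have v0: "v \<noteq> 0"
  proof
    assume "v = 0"
    then have "scale 0 u + scale 1 v = 0" by simp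
    then show False using ind[rule_format, of 0 1] by simp
  qed
  have iv: "V.independent {v}"
    using V.independent_insert[of v "{}"] v0 by (simp add: V.span_empty)
  have "u \<notin> V.span {v}"
  proof
    assume "u \<in> V.span {v}"
    then obtain k where "u = scale k v" by (auto simp: V.span_singleton)
    then have "scale 1 u + scale (- k) v = 0" by simp
    then show False using ind[rule_format, of 1 "- k"] by simp
  qed
  then have indB: "V.independent {u, v}"
    using V.independent_insert[of u "{v}"] iv uv by simp
  obtain lam where lam: "Vector_Spaces.linear scale (*) lam" "\<forall>x\<in>{u, v}. lam x = (if x = u then 1 else 0)"
    using VP.linear_independent_extend[OF indB, of "\<lambda>x. if x = u then 1 else 0"] by blast
  obtain mu where mu: "Vector_Spaces.linear scale (*) mu" "\<forall>x\<in>{u, v}. mu x = (if x = v then 1 else 0)"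
    using VP.linear_independent_extend[OF indB, of "\<lambda>x. if x = v then 1 else 0"] by blast
  have lh: "module_hom scale (*) lam" and mh: "module_hom scale (*) mu"
    using lam(1) mu(1) by (simp_all add: module_hom_iff_linear)
  define \<alpha> where "\<alpha> x = pCons (e x) (pCons 0 (pCons (lam (comp x 1)) [:mu (comp x 1):]))" for x
  have a_add: "\<alpha> (x + y) = \<alpha> x + \<alpha> y" for x y
    by (simp add: \<alpha>_def e_add comp_add module_hom.add[OF lh] module_hom.add[OF mh])
  have a_scale: "\<alpha> (scale c x) = smult c (\<alpha> x)" for c x
    by (simp add: \<alpha>_def e_scale comp_scale module_hom.scale[OF lh] module_hom.scale[OF mh])
  have a_one: "\<alpha> 1 = 1"
    by (simp add: \<alpha>_def e_one comp_one module_hom.zero[OF lh] module_hom.zero[OF mh])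
  have a_pos: "\<alpha> x = monom 1 2 * [:lam (comp x 1), mu (comp x 1):]" if "x \<in> Agr i" "i \<noteq> 0" for x i
    using e_pos[OF that] by (simp add: \<alpha>_def pp_monom)
  have TI: "is_ideal (trunc_ideal 3 :: 'k poly set)" by (rule trunc_ideal_is)
  have hom: "\<alpha> (x * y) - \<alpha> x * \<alpha> y \<in> trunc_ideal 3" if x: "x \<in> Agr i" and y: "y \<in> Agr j" for i j x y
  proof (cases "i = 0")
    case True
    then obtain c where c: "x = scale c 1" using A0s x by blast
    have "x * y = scale c y" using c scale_1[of c y] by simp
    then have "\<alpha> (x * y) - \<alpha> x * \<alpha> y = 0" using c a_scale a_one by simp
    then show ?thesis using ideal_0[OF TI] by simp
  next
    case i0: False
    show ?thesis
    proof (cases "j = 0")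
      case True
      then obtain c where c: "y = scale c 1" using A0s y by blast
      have "x * y = scale c x" using c scale_1[of c x] by (simp add: mult.commute)
      then have e1: "\<alpha> (x * y) = smult c (\<alpha> x)" using a_scale by simp
      have e2: "\<alpha> y = [:c:]" using c a_scale a_one by simp
      have "\<alpha> (x * y) - \<alpha> x * \<alpha> y = 0" unfolding e1 e2 by simp
      then show ?thesis using ideal_0[OF TI] by simp
    next
      case j0: False
      have xy: "x * y \<in> Agr (i + j)" by (rule hmul[OF x y])
      have "comp (x * y) 1 = 0" using comp_homog[OF xy] i0 j0 by simp
      then have z: "\<alpha> (x * y) = 0"
        using a_pos[OF xy] i0 by (simp add: module_hom.zero[OF lh] module_hom.zero[OF mh])
      have m4: "monom 1 2 * monom 1 2 = (monom 1 4 :: 'k poly)" by (simp add: mult_monom)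
      have "\<alpha> x * \<alpha> y = (monom 1 2 * monom 1 2) * ([:lam (comp x 1), mu (comp x 1):] * [:lam (comp y 1), mu (comp y 1):])"
        unfolding a_pos[OF x i0] a_pos[OF y j0] by (simp only: mult_ac)
      then have "\<alpha> x * \<alpha> y = monom 1 4 * ([:lam (comp x 1), mu (comp x 1):] * [:lam (comp y 1), mu (comp y 1):])"
        unfolding m4 .
      moreover have g4: "eqN 3 (monom 1 4 * R) 0" for R :: "'k poly"
        unfolding eqN_def coeff_monom_mult by simp
      ultimately have "eqN 3 (\<alpha> x * \<alpha> y) 0" by metis
      then have "\<alpha> x * \<alpha> y \<in> trunc_ideal 3" by (simp add: trunc_iff)
      then show ?thesis using z ideal_neg[OF TI] by simp
    qed
  qed
  have ahom: "alg_hom_mod scale (\<lambda>c. [:c:]) (trunc_ideal 3) \<alpha>"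
    unfolding alg_hom_mod_def
    using a_add a_scale a_one bilin[OF a_add TI hom] ideal_0[OF TI] by simp
  have au: "\<alpha> u = monom 1 2 * [:1, 0:]"
    using a_pos[OF u] lam(2) mu(2) uv by (simp add: comp_homog[OF u])
  have av: "\<alpha> v = monom 1 2 * [:0, 1:]"
    using a_pos[OF v] lam(2) mu(2) uv by (simp add: comp_homog[OF v])
  have "quot_dim_ge2 (\<lambda>c. [:c:]) (trunc_ideal 3) (\<alpha> ` Agr 1)"
    unfolding quot_dim_ge2_def
  proof (intro bexI allI impI)
    fix c d assume "[:c:] * \<alpha> u + [:d:] * \<alpha> v \<in> trunc_ideal 3"
    then have e: "eqN 3 ([:c:] * \<alpha> u + [:d:] * \<alpha> v) 0" by (simp add: trunc_iff)
    have "c = coeff ([:c:] * \<alpha> u + [:d:] * \<alpha> v) 2"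
      unfolding au av smult_conv coeff_add coeff_smult coeff_monom_mult by simp
    also have "\<dots> = 0" using eqN_coeff[OF e, of 2] by simp
    finally have c: "c = 0" .
    have "d = coeff ([:c:] * \<alpha> u + [:d:] * \<alpha> v) 3"
      unfolding au av smult_conv coeff_add coeff_smult coeff_monom_mult by (simp add: numeral_3_eq_3)
    also have "\<dots> = 0" using eqN_coeff[OF e, of 3] by simp
    finally show "c = 0 \<and> d = 0" using c by simp
  qed (use u v in auto)
  then show ?thesis unfolding crit_set_def using ahom by blast
qed

end

theorem proposition2p5:
  fixes scale :: "'k::field_char_0 \<Rightarrow> 'a::comm_ring_1 \<Rightarrow> 'a"
    and Agr :: "nat \<Rightarrow> 'a set"
  assumes alg_closed: "\<forall>p::'k poly. degree p > 0 \<longrightarrow> (\<exists>x. poly p x = 0)"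
    and "kalg scale"
    and "finite_dim scale"
    and "std_graded scale Agr"
    and "\<not> principal_ideal_algebra TYPE('a)"
  shows "\<exists>\<phi>. alg_hom_mod scale (\<lambda>c. [:[:c:]:]) (Q_ideal (crit_deg scale Agr)) \<phi> \<and>
             (\<forall>q. \<exists>a. q - \<phi> a \<in> Q_ideal (crit_deg scale Agr))"
proof -
  interpret S: sga scale Agr using assms(2,4) by (simp add: sga_def)
  have A0s: "\<And>x. x \<in> Agr 0 \<Longrightarrow> \<exists>c. x = scale c 1"
    using S.A0_scalar[OF alg_closed assms(3)] by blast
  interpret S0: sga0 scale Agr using A0s by (simp add: sga0_def sga0_axioms_def S.sga_axioms)
  obtain u v where uv: "u \<in> Agr 1" "v \<in> Agr 1" "\<forall>c d. scale c u + scale d v = 0 \<longrightarrow> c = 0 \<and> d = 0"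
    using S0.two_indep[OF assms(5)] by blast
  have ne: "crit_set scale Agr \<noteq> {}" using S0.one_crit[OF uv] by blast
  define r where "r = crit_deg scale Agr"
  have "r \<in> crit_set scale Agr" unfolding r_def crit_deg_def by (rule Max_in[OF S0.crit_finite ne])
  then obtain N and \<alpha> :: "'a \<Rightarrow> 'k poly" where
    ah: "alg_hom_mod scale (\<lambda>c. [:c:]) (trunc_ideal N) \<alpha>" and
    q: "quot_dim_ge2 (\<lambda>c. [:c:]) (trunc_ideal N) (\<alpha> ` Agr r)"
    unfolding crit_set_def by blast
  then obtain u' v' where u'v': "u' \<in> Agr r" "v' \<in> Agr r"
    "\<forall>c d. [:c:] * \<alpha> u' + [:d:] * \<alpha> v' \<in> trunc_ideal N \<longrightarrow> c = 0 \<and> d = 0"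
    unfolding quot_dim_ge2_def by blast
  interpret C: critset scale Agr \<alpha> N r u' v'
    using ah A0s u'v' by (simp add: critset_def critset_axioms_def arcset_def arcset_axioms_def S.sga_axioms)
  show ?thesis using C.main_result unfolding r_def .
qed



end
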